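(* Let $n\ge1$ and $m$ be integers, $\beta>0$, $0<\gamma\le 1$. Let $(s,z)$ be the Nielsen–Olesen vortex profile (see context) and set $$x=(\gamma-1)z-\frac{2\gamma n+m}{2r},\qquad y=\gamma z-\frac{2\gamma n+m}{2r}.$$ Suppose real functions $u,v$ on $(0,\infty)$, not both identically zero, satisfy either the equations \begin{align*} &v''+\tfrac{v'}{r}-\tfrac{v}{r^2}+2\big(2y'u+yu'+\tfrac{1}{r}yu\big)-4vu^2-\gamma v s^2=0,\\ &v'y-vy'+\big(2y^2+\tfrac{\gamma}{2}s^2+2v^2\big)u=0, \end{align*} or these same equations linearized in $(u,v)$ (i.e. with the terms $-4vu^2$ and $2v^2u$ omitted), together with the finite-energy boundary conditions $u=u_0r^k(1+o(1))$, $v=v_0r^k(1+o(1))$ as $r\to0$ for some $k>-\tfrac12$, and exponential decay of $u,v$ (like $e^{-\sqrt\gamma\, r}$ up to powers of $r$) as $r\to\infty$. Then $-2n<m<0$.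
   Context: The Nielsen–Olesen vortex profile $(s,z)$ with winding number $n$ consists of real functions on $(0,\infty)$ solving $s''+\frac{s'}{r}-[z^2+\frac{\beta}{2}(s^2-1)]s=0$ and $z''+\frac{z'}{r}-\frac{z}{r^2}-zs^2=0$, with $s=s_0r^n(1+o(1))$, $z=\frac nr+z_0r+o(r)$ as $r\to0$ and $s\to1$, $z\to0$ exponentially as $r\to\infty$. The given $x,y$ are the values of the auxiliary gauge fields for this embedded ($Z_{NO}$) vortex with vanishing electromagnetic potential; $u,v$ are the radial and azimuthal profiles of a $W$ field $\propto[u\,\mathbf e_r+iv\,\mathbf e_\varphi]e^{im\varphi}$ in the gauge where the Higgs doublet has vanishing upper component. $\beta=(M_H/M_Z)^2$, $\gamma=\cos^2\theta_{\rm w}$. *)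

theory Defs
  imports "HOL-Analysis.Analysis"
begin

text \<open>Nielsen--Olesen vortex profile (s,z) with winding number n, Higgs parameter beta,
  as real functions on (0,infinity) (values at r \<le> 0 are irrelevant).\<close>
definition NO_vortex :: "int \<Rightarrow> real \<Rightarrow> (real \<Rightarrow> real) \<Rightarrow> (real \<Rightarrow> real) \<Rightarrow> bool" where
  "NO_vortex n \<beta> s z \<longleftrightarrow>
     (\<forall>r>0. s differentiable (at r) \<and> deriv s differentiable (at r) \<and>
            z differentiable (at r) \<and> deriv z differentiable (at r)) \<and>
     (\<forall>r>0. deriv (deriv s) r + deriv s r / r
              - ((z r)\<^sup>2 + \<beta> / 2 * ((s r)\<^sup>2 - 1)) * s r = 0) \<and>
     (\<forall>r>0. deriv (deriv z) r + deriv z r / r - z r / r\<^sup>2 - z r * (s r)\<^sup>2 = 0) \<and>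
     (\<exists>s0 e. (e \<longlongrightarrow> 0) (at_right 0) \<and>
            (\<forall>r>0. s r = s0 * r ^ nat n * (1 + e r))) \<and>
     (\<exists>z0 e. (e \<longlongrightarrow> 0) (at_right 0) \<and>
            (\<forall>r>0. z r = of_int n / r + z0 * r + r * e r)) \<and>
     (\<exists>C a. a > 0 \<and> (\<forall>\<^sub>F r in at_top. \<bar>s r - 1\<bar> \<le> C * exp (- a * r) \<and>
                                          \<bar>z r\<bar> \<le> C * exp (- a * r)))"

definition W_eqs :: "bool \<Rightarrow> real \<Rightarrow> (real \<Rightarrow> real) \<Rightarrow> (real \<Rightarrow> real) \<Rightarrow>
                     (real \<Rightarrow> real) \<Rightarrow> (real \<Rightarrow> real) \<Rightarrow> bool" where
  "W_eqs nl \<gamma> s y u v \<longleftrightarrow>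
     (\<forall>r>0. u differentiable (at r) \<and> v differentiable (at r) \<and> deriv v differentiable (at r)) \<and>
     (\<forall>r>0. deriv (deriv v) r + deriv v r / r - v r / r\<^sup>2
              + 2 * (2 * deriv y r * u r + y r * deriv u r + y r * u r / r)
              - (if nl then 4 * v r * (u r)\<^sup>2 else 0)
              - \<gamma> * v r * (s r)\<^sup>2 = 0) \<and>
     (\<forall>r>0. deriv v r * y r - v r * deriv y r
              + (2 * (y r)\<^sup>2 + \<gamma> / 2 * (s r)\<^sup>2 + (if nl then 2 * (v r)\<^sup>2 else 0)) * u r = 0)"

definition W_bc :: "real \<Rightarrow> (real \<Rightarrow> real) \<Rightarrow> (real \<Rightarrow> real) \<Rightarrow> bool" where
  "W_bc \<gamma> u v \<longleftrightarrow>
     (\<exists>k u0 v0 eu ev. k > - 1/2 \<and> (eu \<longlongrightarrow> 0) (at_right 0) \<and> (ev \<longlongrightarrow> 0) (at_right 0) \<and>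
        (\<forall>r>0. u r = u0 * r powr k * (1 + eu r) \<and> v r = v0 * r powr k * (1 + ev r))) \<and>
     (\<exists>C p. \<forall>\<^sub>F r in at_top. \<bar>u r\<bar> \<le> C * r powr p * exp (- sqrt \<gamma> * r) \<and>
                              \<bar>v r\<bar> \<le> C * r powr p * exp (- sqrt \<gamma> * r))"

end

theory Submission
  imports Defs "HOL-Real_Asymp.Real_Asymp"
begin


lemma first_hit:
  fixes f :: "real \<Rightarrow> real"
  assumes cd: "c \<le> d" and cont: "continuous_on {c..d} f" and fc: "f c < L" and fd: "L \<le> f d"
  shows "\<exists>T. c < T \<and> T \<le> d \<and> f T = L \<and> (\<forall>t. c \<le> t \<and> t < T \<longrightarrow> f t < L)"
proof -
  define S where "S = {c..d} \<inter> f -` {L..}"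
  have cl: "closed S" unfolding S_def by (rule continuous_closed_preimage[OF cont]) auto
  have ne: "S \<noteq> {}" using cd fd unfolding S_def by auto
  have bb: "bdd_below S" unfolding S_def by (rule bdd_belowI[of _ c]) auto
  define T where "T = Inf S"
  have TS: "T \<in> S" unfolding T_def by (rule closed_contains_Inf[OF ne bb cl])
  have low: "\<And>t. t \<in> S \<Longrightarrow> T \<le> t" unfolding T_def using bb by (simp add: cInf_lower)
  have Tc: "c \<le> T" "T \<le> d" "L \<le> f T" using TS unfolding S_def by auto
  have below: "\<forall>t. c \<le> t \<and> t < T \<longrightarrow> f t < L"
  proof (intro allI impI)
    fix t assume t: "c \<le> t \<and> t < T"
    show "f t < L"
    proof (rule ccontr)
      assume "\<not> f t < L"
      then have "t \<in> S" using t Tc unfolding S_def by auto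
      then show False using low t by fastforce
    qed
  qed
  have Tne: "T \<noteq> c" using Tc fc by auto
  have "f T = L"
  proof (rule ccontr)
    assume "f T \<noteq> L"
    then have "f c \<le> L" "L \<le> f T" using fc Tc by auto
    moreover have "continuous_on {c..T} f" by (rule continuous_on_subset[OF cont]) (use Tc in auto)
    ultimately obtain t where t: "c \<le> t" "t \<le> T" "f t = L" using IVT'[of f c L T] Tc by auto
    have "t \<noteq> T" using t \<open>f T \<noteq> L\<close> by auto
    then show False using below t by force
  qed
  then show ?thesis using Tc Tne below by (intro exI[of _ T]) auto
qed

lemma attains_max_pos:
  fixes f :: "real \<Rightarrow> real"
  assumes cont: "continuous_on {0<..} f" and l0: "(f \<longlongrightarrow> L0) (at_right 0)"
    and l1: "(f \<longlongrightarrow> L1) at_top" and r1: "r1 > 0" and fr1: "f r1 > max L0 L1"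
  shows "\<exists>r0>0. \<forall>r>0. f r \<le> f r0"
proof -
  have "eventually (\<lambda>x. f x < f r1) (at_right 0)" using order_tendstoD(2)[OF l0, of "f r1"] fr1 by auto
  then obtain b where b: "b > 0" "\<And>y. 0 < y \<Longrightarrow> y < b \<Longrightarrow> f y < f r1"
    unfolding eventually_at_right_field by auto
  have "eventually (\<lambda>x. f x < f r1) at_top" using order_tendstoD(2)[OF l1, of "f r1"] fr1 by auto
  then obtain N where N: "\<And>y. y \<ge> N \<Longrightarrow> f y < f r1" unfolding eventually_at_top_linorder by auto
  define S where "S = {min (b/2) r1 .. max N r1}"
  have pos: "0 < min (b/2) r1" using b r1 by auto
  have "continuous_on S f" unfolding S_def by (rule continuous_on_subset[OF cont]) (use pos in auto)
  moreover have "compact S" "S \<noteq> {}" unfolding S_def by auto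
  ultimately obtain x0 where x0: "x0 \<in> S" "\<And>y. y \<in> S \<Longrightarrow> f y \<le> f x0"
    using continuous_attains_sup[of S f] by auto
  have r1S: "r1 \<in> S" unfolding S_def by auto
  have x0pos: "x0 > 0" using x0(1) pos unfolding S_def by auto
  have "\<forall>r>0. f r \<le> f x0"
  proof (intro allI impI)
    fix r :: real assume r: "r > 0"
    show "f r \<le> f x0"
    proof (cases "r \<in> S")
      case True then show ?thesis using x0 by auto
    next
      case False
      then have "r < min (b/2) r1 \<or> r > max N r1" unfolding S_def by auto
      then have "f r < f r1" using b N r by (auto simp: min_def max_def split: if_splits)
      then show ?thesis using x0(2)[OF r1S] by auto
    qed
  qed
  then show ?thesis using x0pos by auto
qed

lemma attains_min_pos:
  fixes f :: "real \<Rightarrow> real"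
  assumes cont: "continuous_on {0<..} f" and l0: "(f \<longlongrightarrow> L0) (at_right 0)"
    and l1: "(f \<longlongrightarrow> L1) at_top" and r1: "r1 > 0" and fr1: "f r1 < min L0 L1"
  shows "\<exists>r0>0. \<forall>r>0. f r0 \<le> f r"
proof -
  have "\<exists>r0>0. \<forall>r>0. (\<lambda>x. - f x) r \<le> (\<lambda>x. - f x) r0"
    by (rule attains_max_pos[of "\<lambda>x. - f x" "-L0" "-L1" r1])
       (use cont l0 l1 r1 fr1 in \<open>auto intro!: continuous_intros tendsto_intros\<close>)
  then show ?thesis by auto
qed



lemma B_alg:
  fixes r u u1 v v1 v2 y y1 y2 s z \<gamma> c :: real
  assumes r: "r > 0" and y: "y \<noteq> 0"
  and e1: "v2 + v1/r - v/r\<^sup>2 + 2 * (2 * y1 * u + y * u1 + y * u/r) - 2 * c * v * u\<^sup>2 - \<gamma> * v * s\<^sup>2 = 0"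
  and e2: "v1 * y - v * y1 + (2 * y\<^sup>2 + \<gamma>/2 * s\<^sup>2 + c * v\<^sup>2) * u = 0"
  and ez: "y2 + y1/r - y/r\<^sup>2 = \<gamma> * z * s\<^sup>2"
  shows "(v1 + 2 * y * u) * v + r * (v2 + 2 * (y1 * u + y * u1)) * v + r * (v1 + 2 * y * u) * v1
     - (y1 * v\<^sup>2/y + r * y2 * v\<^sup>2/y + r * y1 * (2 * v * v1)/y - r * y1 * v\<^sup>2 * y1/y\<^sup>2)
   = \<gamma> * r * s\<^sup>2 * (y - z) * v\<^sup>2/y + r * u\<^sup>2 * ((2 * y\<^sup>2 + \<gamma>/2 * s\<^sup>2 + c * v\<^sup>2)\<^sup>2 - 2 * (2 * y\<^sup>2 + \<gamma>/2 * s\<^sup>2) * y\<^sup>2)/y\<^sup>2"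
proof -
  have v2e: "v2 = -v1/r + v/r\<^sup>2 - 2 * (2 * y1 * u+y * u1+y * u/r) + 2 * c * v * u\<^sup>2 + \<gamma> * v * s\<^sup>2" using e1 by linarith
  have y2e: "y2 = \<gamma> * z * s\<^sup>2 - y1/r + y/r\<^sup>2" using ez by linarith
  have v1e: "v1 = (v * y1 - (2 * y\<^sup>2 + \<gamma>/2 * s\<^sup>2 + c * v\<^sup>2) * u)/y" using e2 y by (simp add: field_simps)
  show ?thesis
    apply (simp only: v2e y2e)
    apply (simp only: v1e)
    using r y apply (simp add: field_simps power2_eq_square)
    done
qed


locale VX =
  fixes n m :: int and \<gamma> :: real and s z u v y :: "real \<Rightarrow> real" and nl :: bool
    and s0 z0 :: real and es ez :: "real \<Rightarrow> real" and Cd ad :: real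
    and k u0 v0 :: real and eu ev :: "real \<Rightarrow> real" and Cw pw :: real
  assumes n1: "n \<ge> 1" and gpos: "0 < \<gamma>" and g1: "\<gamma> \<le> 1"
    and sdiff: "\<forall>r>0. s differentiable (at r) \<and> deriv s differentiable (at r) \<and>
            z differentiable (at r) \<and> deriv z differentiable (at r)"
    and zeq: "\<forall>r>0. deriv (deriv z) r + deriv z r / r - z r / r\<^sup>2 - z r * (s r)\<^sup>2 = 0"
    and es0: "(es \<longlongrightarrow> 0) (at_right 0)" and sform: "\<forall>r>0. s r = s0 * r ^ nat n * (1 + es r)"
    and ez0: "(ez \<longlongrightarrow> 0) (at_right 0)" and zform: "\<forall>r>0. z r = of_int n / r + z0 * r + r * ez r"
    and adpos: "ad > 0"
    and decay: "\<forall>\<^sub>F r in at_top. \<bar>s r - 1\<bar> \<le> Cd * exp (- ad * r) \<and> \<bar>z r\<bar> \<le> Cd * exp (- ad * r)"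
    and ydef: "y = (\<lambda>r. \<gamma> * z r - (2 * \<gamma> * of_int n + of_int m) / (2 * r))"
    and udiff: "\<forall>r>0. u differentiable (at r) \<and> v differentiable (at r) \<and> deriv v differentiable (at r)"
    and eq1: "\<forall>r>0. deriv (deriv v) r + deriv v r / r - v r / r\<^sup>2
              + 2 * (2 * deriv y r * u r + y r * deriv u r + y r * u r / r)
              - (if nl then 4 * v r * (u r)\<^sup>2 else 0)
              - \<gamma> * v r * (s r)\<^sup>2 = 0"
    and eq2: "\<forall>r>0. deriv v r * y r - v r * deriv y r
              + (2 * (y r)\<^sup>2 + \<gamma> / 2 * (s r)\<^sup>2 + (if nl then 2 * (v r)\<^sup>2 else 0)) * u r = 0"
    and kbig: "k > - 1/2" and eu0: "(eu \<longlongrightarrow> 0) (at_right 0)" and ev0: "(ev \<longlongrightarrow> 0) (at_right 0)"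
    and uvform: "\<forall>r>0. u r = u0 * r powr k * (1 + eu r) \<and> v r = v0 * r powr k * (1 + ev r)"
    and uvdecay: "\<forall>\<^sub>F r in at_top. \<bar>u r\<bar> \<le> Cw * r powr pw * exp (- sqrt \<gamma> * r) \<and>
                              \<bar>v r\<bar> \<le> Cw * r powr pw * exp (- sqrt \<gamma> * r)"
begin

definition "K = 2 * \<gamma> * of_int n + of_int m"
definition "cc = (if nl then 2 else (0::real))"
definition "y1 r = \<gamma> * deriv z r + K / (2 * r\<^sup>2)"
definition "y2 r = \<gamma> * deriv (deriv z) r - K / r ^ 3"
definition "a r = r * z r"
definition "a1 r = z r + r * deriv z r"
definition "g r = z r / r + deriv z r"

lemma s_der: "r > 0 \<Longrightarrow> (s has_real_derivative deriv s r) (at r)"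
  using sdiff DERIV_deriv_iff_real_differentiable by blast
lemma z_der: "r > 0 \<Longrightarrow> (z has_real_derivative deriv z r) (at r)"
  using sdiff DERIV_deriv_iff_real_differentiable by blast
lemma z1_der: "r > 0 \<Longrightarrow> (deriv z has_real_derivative deriv (deriv z) r) (at r)"
  using sdiff DERIV_deriv_iff_real_differentiable by blast
lemma u_der: "r > 0 \<Longrightarrow> (u has_real_derivative deriv u r) (at r)"
  using udiff DERIV_deriv_iff_real_differentiable by blast
lemma v_der: "r > 0 \<Longrightarrow> (v has_real_derivative deriv v r) (at r)"
  using udiff DERIV_deriv_iff_real_differentiable by blast
lemma v1_der: "r > 0 \<Longrightarrow> (deriv v has_real_derivative deriv (deriv v) r) (at r)"
  using udiff DERIV_deriv_iff_real_differentiable by blast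

lemma s_cont: "r > 0 \<Longrightarrow> isCont s r" using s_der DERIV_isCont by blast
lemma z_cont: "r > 0 \<Longrightarrow> isCont z r" using z_der DERIV_isCont by blast
lemma u_cont: "r > 0 \<Longrightarrow> isCont u r" using u_der DERIV_isCont by blast
lemma v_cont: "r > 0 \<Longrightarrow> isCont v r" using v_der DERIV_isCont by blast

lemma y_eq: "y r = \<gamma> * z r - K / (2 * r)" using ydef K_def by simp

lemma y_der: assumes "r > 0" shows "(y has_real_derivative y1 r) (at r)"
proof -
  have "((\<lambda>r. \<gamma> * z r - K / (2 * r)) has_real_derivative y1 r) (at r)"
    using assms unfolding y1_def
    by (auto intro!: derivative_eq_intros z_der simp: power2_eq_square field_simps)
  moreover have "y = (\<lambda>r. \<gamma> * z r - K / (2 * r))" using y_eq by auto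
  ultimately show ?thesis by simp
qed

lemma deriv_y: "r > 0 \<Longrightarrow> deriv y r = y1 r" using y_der DERIV_imp_deriv by blast

lemma y1_der: assumes "r > 0" shows "(y1 has_real_derivative y2 r) (at r)"
proof -
  have "((\<lambda>r. \<gamma> * deriv z r + K / (2 * r\<^sup>2)) has_real_derivative y2 r) (at r)"
    using assms unfolding y2_def
    by (auto intro!: derivative_eq_intros z1_der simp: power2_eq_square power3_eq_cube field_simps)
  then show ?thesis unfolding y1_def[abs_def] by simp
qed

lemma y_cont: "r > 0 \<Longrightarrow> isCont y r" using y_der DERIV_isCont by blast

lemma Ez: assumes "r > 0" shows "y2 r + y1 r / r - y r / r\<^sup>2 = \<gamma> * z r * (s r)\<^sup>2"
proof -
  have "deriv (deriv z) r + deriv z r / r - z r / r\<^sup>2 - z r * (s r)\<^sup>2 = 0" using zeq assms by auto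
  then have z2: "deriv (deriv z) r = z r * (s r)\<^sup>2 - deriv z r / r + z r / r\<^sup>2" by linarith
  show ?thesis using assms unfolding y2_def y1_def y_eq z2
    by (simp add: field_simps power2_eq_square power3_eq_cube)
qed

end

context VX begin

definition "B r = r * (deriv v r + 2 * y r * u r) * v r - r * y1 r * (v r)\<^sup>2/y r"
definition "Bu r = - r * u r * v r * (\<gamma> * (s r)\<^sup>2/2 + cc * (v r)\<^sup>2) / y r"
definition "Qf r = 2 * (y r)\<^sup>2 + \<gamma>/2 * (s r)\<^sup>2"
definition "Wf r = Qf r + cc * (v r)\<^sup>2"
definition "D r = \<gamma> * r * (s r)\<^sup>2 * (y r - z r) * (v r)\<^sup>2/y r + r * (u r)\<^sup>2 * ((Wf r)\<^sup>2 - 2 * Qf r * (y r)\<^sup>2)/(y r)\<^sup>2"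

lemma eq1': "r > 0 \<Longrightarrow> deriv (deriv v) r + deriv v r / r - v r / r\<^sup>2
              + 2 * (2 * y1 r * u r + y r * deriv u r + y r * u r / r)
              - 2 * cc * v r * (u r)\<^sup>2 - \<gamma> * v r * (s r)\<^sup>2 = 0"
  using eq1 deriv_y unfolding cc_def by (cases nl) auto

lemma eq2': "r > 0 \<Longrightarrow> deriv v r * y r - v r * y1 r + (2 * (y r)\<^sup>2 + \<gamma> / 2 * (s r)\<^sup>2 + cc * (v r)\<^sup>2) * u r = 0"
  using eq2 deriv_y unfolding cc_def by (cases nl) auto

lemma B_Bu: assumes "r > 0" "y r \<noteq> 0" shows "B r = Bu r"
proof -
  have e: "deriv v r * y r = v r * y1 r - (2 * (y r)\<^sup>2 + \<gamma> / 2 * (s r)\<^sup>2 + cc * (v r)\<^sup>2) * u r"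
    using eq2'[OF assms(1)] by linarith
  have "B r = r * v r * (deriv v r * y r + 2 * (y r)\<^sup>2 * u r)/y r - r * y1 r * (v r)\<^sup>2/y r"
    unfolding B_def using assms by (simp add: field_simps power2_eq_square)
  also have "\<dots> = Bu r" unfolding e Bu_def using assms by (simp add: field_simps power2_eq_square)
  finally show ?thesis .
qed

lemma B_der: assumes r: "r > 0" and y0: "y r \<noteq> 0" shows "(B has_real_derivative D r) (at r)"
proof -
  have "(B has_real_derivative
     (deriv v r + 2 * y r * u r) * v r + r * (deriv (deriv v) r + 2 * (y1 r * u r + y r * deriv u r)) * v r
       + r * (deriv v r + 2 * y r * u r) * deriv v r
     - (y1 r * (v r)\<^sup>2/y r + r * y2 r * (v r)\<^sup>2/y r + r * y1 r * (2 * v r * deriv v r)/y r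
        - r * y1 r * (v r)\<^sup>2 * y1 r/(y r)\<^sup>2)) (at r)"
    unfolding B_def[abs_def] using r y0
    by (auto intro!: derivative_eq_intros v_der v1_der u_der y_der y1_der
        simp: field_simps power2_eq_square)
  moreover have "(deriv v r + 2 * y r * u r) * v r + r * (deriv (deriv v) r + 2 * (y1 r * u r + y r * deriv u r)) * v r
       + r * (deriv v r + 2 * y r * u r) * deriv v r
     - (y1 r * (v r)\<^sup>2/y r + r * y2 r * (v r)\<^sup>2/y r + r * y1 r * (2 * v r * deriv v r)/y r
        - r * y1 r * (v r)\<^sup>2 * y1 r/(y r)\<^sup>2) = D r"
    unfolding D_def Wf_def Qf_def
    by (rule B_alg[OF r y0 eq1'[OF r] eq2'[OF r] Ez[OF r]])
  ultimately show ?thesis by simp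
qed

end

context VX begin

definition "a2 r = a1 r / r + (s r)\<^sup>2 * a r"

lemma a_der: "r > 0 \<Longrightarrow> (a has_real_derivative a1 r) (at r)"
  unfolding a_def[abs_def] a1_def by (auto intro!: derivative_eq_intros z_der)

lemma a1_der: assumes "r > 0" shows "(a1 has_real_derivative a2 r) (at r)"
proof -
  have z2: "deriv (deriv z) r = z r * (s r)\<^sup>2 - deriv z r / r + z r / r\<^sup>2" using zeq assms by auto
  have "(a1 has_real_derivative (deriv z r + (deriv z r + r * deriv (deriv z) r))) (at r)"
    unfolding a1_def[abs_def] using assms by (auto intro!: derivative_eq_intros z_der z1_der)
  moreover have "deriv z r + (deriv z r + r * deriv (deriv z) r) = a2 r"
    unfolding a2_def a1_def a_def z2 using assms by (simp add: field_simps power2_eq_square)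
  ultimately show ?thesis by simp
qed

lemma g_a1: "r > 0 \<Longrightarrow> g r = a1 r / r" unfolding g_def a1_def by (simp add: field_simps)

lemma g_der: assumes "r > 0" shows "(g has_real_derivative a r * (s r)\<^sup>2 / r) (at r)"
proof -
  have z2: "deriv (deriv z) r = z r * (s r)\<^sup>2 - deriv z r / r + z r / r\<^sup>2" using zeq assms by auto
  have "(g has_real_derivative ((deriv z r * r - z r) / r\<^sup>2 + deriv (deriv z) r)) (at r)"
    unfolding g_def[abs_def] using assms
    by (auto intro!: derivative_eq_intros z_der z1_der simp: power2_eq_square)
  moreover have "(deriv z r * r - z r) / r\<^sup>2 + deriv (deriv z) r = a r * (s r)\<^sup>2 / r"
    unfolding a_def z2 using assms by (simp add: field_simps power2_eq_square)
  ultimately show ?thesis by simp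
qed

lemma a_cont: "continuous_on {0<..} a"
  using a_der by (meson DERIV_isCont continuous_at_imp_continuous_on greaterThan_iff)

lemma a_form: "r > 0 \<Longrightarrow> a r = of_int n + r\<^sup>2 * (z0 + ez r)"
  unfolding a_def using zform by (simp add: field_simps power2_eq_square)

lemma a_lim0: "(a \<longlongrightarrow> of_int n) (at_right 0)"
proof -
  have "((\<lambda>r. of_int n + r\<^sup>2 * (z0 + ez r)) \<longlongrightarrow> of_int n + 0\<^sup>2 * (z0 + 0)) (at_right 0)"
    by (intro tendsto_intros ez0)
  moreover have "eventually (\<lambda>r. of_int n + r\<^sup>2 * (z0 + ez r) = a r) (at_right 0)"
    using a_form by (auto simp: eventually_at_right_field intro!: exI[of _ 1])
  ultimately show ?thesis by (simp add: tendsto_cong)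
qed

lemma a_liminf: "(a \<longlongrightarrow> 0) at_top"
proof (rule Lim_null_comparison)
  show "eventually (\<lambda>r. norm (a r) \<le> r * Cd * exp (- ad * r)) at_top"
    using decay eventually_gt_at_top[of 0]
  proof eventually_elim
    case (elim r)
    then have "\<bar>z r\<bar> \<le> Cd * exp (- ad * r)" by auto
    then have "r * \<bar>z r\<bar> \<le> r * (Cd * exp (- ad * r))" using elim by (intro mult_left_mono) auto
    then show ?case using elim unfolding a_def by (simp add: abs_mult)
  qed
  show "((\<lambda>r. r * Cd * exp (- ad * r)) \<longlongrightarrow> 0) at_top" using adpos by real_asymp
qed

lemma mono_from_deriv:
  assumes "0 < p" "p \<le> q" "\<And>t. p \<le> t \<Longrightarrow> t \<le> q \<Longrightarrow> (f has_real_derivative f' t) (at t) \<and> f' t \<ge> 0"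
  shows "f p \<le> f q"
proof (rule DERIV_nonneg_imp_nondecreasing[OF assms(2)])
  fix t assume "p \<le> t" "t \<le> q"
  then show "\<exists>y. DERIV f t :> y \<and> y \<ge> 0" using assms(3) by blast
qed

lemma antimono_from_deriv:
  assumes "0 < p" "p \<le> q" "\<And>t. p \<le> t \<Longrightarrow> t \<le> q \<Longrightarrow> (f has_real_derivative f' t) (at t) \<and> f' t \<le> 0"
  shows "f q \<le> f p"
proof (rule DERIV_nonpos_imp_nonincreasing[OF assms(2)])
  fix t assume "p \<le> t" "t \<le> q"
  then show "\<exists>y. DERIV f t :> y \<and> y \<le> 0" using assms(3) by blast
qed

lemma a1_zero_at_min: assumes "r0 > 0" "\<forall>r>0. a r0 \<le> a r" shows "a1 r0 = 0"
  by (rule DERIV_local_min[OF a_der[OF assms(1)] assms(1)]) (use assms in auto)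

lemma a1_zero_at_max: assumes "r0 > 0" "\<forall>r>0. a r \<le> a r0" shows "a1 r0 = 0"
  by (rule DERIV_local_max[OF a_der[OF assms(1)] assms(1)]) (use assms in auto)

lemma a_nonneg: assumes r1: "r1 > 0" shows "a r1 \<ge> 0"
proof (rule ccontr)
  assume "\<not> a r1 \<ge> 0"
  then have "a r1 < min (of_int n) 0" using n1 by auto
  from attains_min_pos[OF a_cont a_lim0 a_liminf r1 this]
  obtain r0 where r0: "r0 > 0" "\<forall>r>0. a r0 \<le> a r" by auto
  define M where "M = a r0"
  have M: "M < 0" using r0(2)[rule_format, OF r1] \<open>\<not> a r1 \<ge> 0\<close> unfolding M_def by auto
  have a10: "a1 r0 = 0" using a1_zero_at_min r0 by auto
  have "eventually (\<lambda>x. a x > M/2) at_top" using order_tendstoD(1)[OF a_liminf, of "M/2"] M by auto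
  then obtain N where N: "\<And>x. x \<ge> N \<Longrightarrow> a x > M/2" unfolding eventually_at_top_linorder by auto
  define R where "R = max N (r0 + 1)"
  have R: "r0 \<le> R" "a R \<ge> M/2" using N[of R] unfolding R_def by auto
  have "continuous_on {r0..R} a" by (rule continuous_on_subset[OF a_cont]) (use r0 in auto)
  from first_hit[OF R(1) this _ R(2)] M
  obtain T where T: "r0 < T" "T \<le> R" "a T = M/2" "\<And>t. r0 \<le> t \<Longrightarrow> t < T \<Longrightarrow> a t < M/2"
    unfolding M_def by auto
  have aneg: "a t \<le> 0" if "r0 \<le> t" "t \<le> T" for t
  proof (cases "t < T")
    case True then show ?thesis using T(4)[of t] that M by auto
  next
    case False then show ?thesis using T(3) that M by auto
  qed
  have gle: "\<And>t. r0 \<le> t \<Longrightarrow> t \<le> T \<Longrightarrow> g t \<le> g r0"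
  proof -
    fix t assume t: "r0 \<le> t" "t \<le> T"
    show "g t \<le> g r0"
    proof (rule antimono_from_deriv[OF r0(1) t(1)])
      fix x assume x: "r0 \<le> x" "x \<le> t"
      have "a x * (s x)\<^sup>2 / x \<le> 0" using aneg[of x] x t r0
        by (intro divide_nonpos_pos mult_nonpos_nonneg) auto
      then show "(g has_real_derivative a x * (s x)\<^sup>2 / x) (at x) \<and> a x * (s x)\<^sup>2 / x \<le> 0"
        using g_der[of x] x r0 by auto
    qed
  qed
  have "a T \<le> a r0"
  proof (rule antimono_from_deriv[OF r0(1)])
    show "r0 \<le> T" using T by auto
    fix x assume x: "r0 \<le> x" "x \<le> T"
    have "g x \<le> 0" using gle[OF x] g_a1[OF r0(1)] a10 by auto
    then have "a1 x \<le> 0" using g_a1[of x] x r0 by (auto simp: divide_le_0_iff)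
    then show "(a has_real_derivative a1 x) (at x) \<and> a1 x \<le> 0" using a_der[of x] x r0 by auto
  qed
  then show False using T M unfolding M_def by auto
qed

lemma g_mono: assumes "0 < p" "p \<le> q" shows "g p \<le> g q"
proof (rule mono_from_deriv[OF assms])
  fix t assume t: "p \<le> t" "t \<le> q"
  have "a t * (s t)\<^sup>2 / t \<ge> 0" using a_nonneg[of t] t assms by auto
  then show "(g has_real_derivative a t * (s t)\<^sup>2 / t) (at t) \<and> a t * (s t)\<^sup>2 / t \<ge> 0"
    using g_der[of t] t assms by auto
qed

lemma no_pos_max: assumes r0: "r0 > 0" "\<forall>r>0. a r \<le> a r0" and pos: "a r0 > 0" shows False
proof -
  have a10: "a1 r0 = 0" using a1_zero_at_max r0 by auto
  have ge: "a r0 \<le> a t" if t: "t \<ge> r0" for t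
  proof (rule mono_from_deriv[OF r0(1) t])
    fix x assume x: "r0 \<le> x" "x \<le> t"
    have "g x \<ge> 0" using g_mono[OF r0(1) x(1)] g_a1[OF r0(1)] a10 by auto
    then have "a1 x \<ge> 0" using g_a1[of x] x r0 by (auto simp: divide_le_0_iff zero_le_divide_iff)
    then show "(a has_real_derivative a1 x) (at x) \<and> a1 x \<ge> 0" using a_der[of x] x r0 by auto
  qed
  have "eventually (\<lambda>x. a x < a r0) at_top" using order_tendstoD(2)[OF a_liminf] pos by auto
  then obtain N where N: "\<And>x. x \<ge> N \<Longrightarrow> a x < a r0" unfolding eventually_at_top_linorder by auto
  show False using ge[of "max N r0"] N[of "max N r0"] by auto
qed

lemma a_le_n: assumes r1: "r1 > 0" shows "a r1 \<le> of_int n"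
proof (rule ccontr)
  assume "\<not> a r1 \<le> of_int n"
  then have "a r1 > max (of_int n) 0" using n1 by auto
  from attains_max_pos[OF a_cont a_lim0 a_liminf r1 this]
  obtain r0 where r0: "r0 > 0" "\<forall>r>0. a r \<le> a r0" by auto
  have "a r0 > 0" using r0 r1 \<open>a r1 > max (of_int n) 0\<close> by force
  then show False using no_pos_max r0 by auto
qed

lemma a_lt_n: assumes r1: "r1 > 0" shows "a r1 < of_int n"
proof (rule ccontr)
  assume "\<not> a r1 < of_int n"
  then have e: "a r1 = of_int n" using a_le_n[OF r1] by auto
  have "\<forall>r>0. a r \<le> a r1" using a_le_n e by auto
  moreover have "a r1 > 0" using e n1 by auto
  ultimately show False using no_pos_max r1 by auto
qed

end

context VX begin

lemma g_neg_exists: "\<exists>r1>0. g r1 < 0"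
proof (rule ccontr)
  assume H: "\<not> (\<exists>r1>0. g r1 < 0)"
  have "eventually (\<lambda>x. a x > of_int n / 2) (at_right 0)"
    using order_tendstoD(1)[OF a_lim0, of "of_int n / 2"] n1 by auto
  then obtain b where b: "b > 0" "\<And>y. 0 < y \<Longrightarrow> y < b \<Longrightarrow> a y > of_int n / 2"
    unfolding eventually_at_right_field by auto
  have "eventually (\<lambda>x. a x < of_int n / 2) at_top"
    using order_tendstoD(2)[OF a_liminf, of "of_int n / 2"] n1 by auto
  then obtain N where N: "\<And>x. x \<ge> N \<Longrightarrow> a x < of_int n / 2" unfolding eventually_at_top_linorder by auto
  have bb: "0 < b/2" "b/2 \<le> max N b" using b by auto
  have "a (b/2) \<le> a (max N b)"
  proof (rule mono_from_deriv[OF bb])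
    fix t assume t: "b/2 \<le> t" "t \<le> max N b"
    then have tp: "t > 0" using b by auto
    have "g t \<ge> 0" using H tp by auto
    then have "a1 t \<ge> 0" using g_a1[OF tp] tp by (simp add: zero_le_divide_iff)
    then show "(a has_real_derivative a1 t) (at t) \<and> a1 t \<ge> 0" using a_der[OF tp] by auto
  qed
  moreover have "a (b/2) > of_int n / 2" using b by auto
  moreover have "a (max N b) < of_int n / 2" using N by auto
  ultimately show False by auto
qed

lemma n_minus_a_bound: "\<exists>c>0. \<exists>r1>0. \<forall>r. 0 < r \<and> r \<le> r1 \<longrightarrow> of_int n - a r \<ge> c * r\<^sup>2"
proof -
  obtain r1 where r1: "r1 > 0" "g r1 < 0" using g_neg_exists by auto
  have main: "of_int n - a r \<ge> (- g r1 / 2) * r\<^sup>2" if r: "0 < r" "r \<le> r1" for r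
  proof -
    have phi: "a r - g r * r\<^sup>2 / 2 \<le> a d - g r * d\<^sup>2 / 2" if d: "0 < d" "d \<le> r" for d
    proof (rule antimono_from_deriv[of d r "\<lambda>x. a x - g r * x\<^sup>2 / 2" "\<lambda>x. a1 x - g r * x"])
      show "0 < d" "d \<le> r" using d by auto
      fix t assume t: "d \<le> t" "t \<le> r"
      then have tp: "t > 0" using d by auto
      have "((\<lambda>x. a x - g r * x\<^sup>2 / 2) has_real_derivative a1 t - g r * t) (at t)"
        by (auto intro!: derivative_eq_intros a_der[OF tp] simp: power2_eq_square)
      moreover have "a1 t - g r * t \<le> 0"
      proof -
        have "g t \<le> g r" using g_mono[OF tp t(2)] .
        moreover have "a1 t = t * g t" using g_a1[OF tp] tp by (simp add: field_simps)
        ultimately show ?thesis using tp by (simp add: mult_left_mono algebra_simps)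
      qed
      ultimately show "((\<lambda>x. a x - g r * x\<^sup>2 / 2) has_real_derivative a1 t - g r * t) (at t) \<and>
          a1 t - g r * t \<le> 0" by auto
    qed
    have lim: "((\<lambda>d. a d - g r * d\<^sup>2 / 2) \<longlongrightarrow> of_int n - g r * 0\<^sup>2 / 2) (at_right 0)"
      by (intro tendsto_intros a_lim0) auto
    have ev: "eventually (\<lambda>d. a r - g r * r\<^sup>2 / 2 \<le> a d - g r * d\<^sup>2 / 2) (at_right 0)"
      unfolding eventually_at_right_field using phi r by (intro exI[of _ r]) auto
    have "a r - g r * r\<^sup>2 / 2 \<le> of_int n"
      using tendsto_lowerbound[OF lim ev] by simp
    moreover have "g r \<le> g r1" using g_mono r by auto
    then have "g r * r\<^sup>2 \<le> g r1 * r\<^sup>2" by (simp add: mult_right_mono)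
    ultimately show ?thesis by (simp add: field_simps)
  qed
  show ?thesis using r1 main by (intro exI[of _ "- g r1 / 2"]) auto
qed

lemma z0_neg: "z0 < 0"
proof -
  obtain c r1 where c: "c > 0" "r1 > 0" "\<And>r. 0 < r \<Longrightarrow> r \<le> r1 \<Longrightarrow> of_int n - a r \<ge> c * r\<^sup>2"
    using n_minus_a_bound by auto
  have "z0 + ez r \<le> - c" if "0 < r" "r \<le> r1" for r
  proof -
    have "of_int n - a r = - (r\<^sup>2 * (z0 + ez r))" using a_form[OF that(1)] by simp
    then have "c * r\<^sup>2 \<le> - (r\<^sup>2 * (z0 + ez r))" using c(3)[OF that] by simp
    then have "r\<^sup>2 * c \<le> r\<^sup>2 * (- (z0 + ez r))" by (simp add: algebra_simps)
    then show ?thesis using that by (simp add: mult_le_cancel_left)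
  qed
  then have ev: "eventually (\<lambda>r. z0 + ez r \<le> - c) (at_right 0)"
    unfolding eventually_at_right_field using c by (intro exI[of _ r1]) auto
  have "((\<lambda>r. z0 + ez r) \<longlongrightarrow> z0 + 0) (at_right 0)" by (intro tendsto_intros ez0)
  then have "z0 \<le> - c" using tendsto_upperbound[OF _ ev] by simp
  then show ?thesis using c by auto
qed

lemma s_lim_top: "(s \<longlongrightarrow> 1) at_top"
proof -
  have "((\<lambda>r. s r - 1) \<longlongrightarrow> 0) at_top"
  proof (rule Lim_null_comparison)
    show "eventually (\<lambda>r. norm (s r - 1) \<le> Cd * exp (- ad * r)) at_top"
      using decay by eventually_elim auto
    show "((\<lambda>r. Cd * exp (- ad * r)) \<longlongrightarrow> 0) at_top" using adpos by real_asymp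
  qed
  then have "((\<lambda>r. (s r - 1) + 1) \<longlongrightarrow> 0 + 1) at_top" by (intro tendsto_intros)
  then show ?thesis by simp
qed

lemma s0_ne: "s0 \<noteq> 0"
proof
  assume "s0 = 0"
  have "eventually (\<lambda>r. s r = 0) at_top" using eventually_gt_at_top[of 0]
    by eventually_elim (use sform \<open>s0 = 0\<close> in auto)
  then have "(s \<longlongrightarrow> 0) at_top" by (rule tendsto_eventually)
  then show False using s_lim_top tendsto_unique[of at_top s 0 1] by auto
qed

lemma s_lim0: "(s \<longlongrightarrow> 0) (at_right 0)"
proof -
  have "((\<lambda>r. s0 * r ^ nat n * (1 + es r)) \<longlongrightarrow> s0 * 0 ^ nat n * (1 + 0)) (at_right 0)"
    by (intro tendsto_intros es0)
  moreover have "0 ^ nat n = (0::real)" using n1 by simp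
  moreover have "eventually (\<lambda>r. s0 * r ^ nat n * (1 + es r) = s r) (at_right 0)"
    using sform by (auto simp: eventually_at_right_field intro!: exI[of _ 1])
  ultimately show ?thesis by (simp add: tendsto_cong)
qed

lemma s_ne_near0: "\<exists>e>0. \<forall>r. 0 < r \<and> r < e \<longrightarrow> s r \<noteq> 0"
proof -
  have "eventually (\<lambda>r. es r > -1/2) (at_right 0)" using order_tendstoD(1)[OF es0] by auto
  then obtain b where b: "b > 0" "\<And>r. 0 < r \<Longrightarrow> r < b \<Longrightarrow> es r > -1/2"
    unfolding eventually_at_right_field by auto
  have "s r \<noteq> 0" if "0 < r" "r < b" for r
  proof -
    have "1 + es r \<noteq> 0" using b(2)[OF that] by auto
    then show ?thesis using sform that s0_ne by auto
  qed
  then show ?thesis using b by auto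
qed

end

lemma sq_ge: "(x::real) \<le> - 3/2 \<Longrightarrow> x\<^sup>2 \<ge> 9/4"
proof -
  assume "x \<le> - 3/2"
  then have "(3/2)\<^sup>2 \<le> (-x)\<^sup>2" by (intro power_mono) auto
  then show ?thesis by (simp add: power2_eq_square)
qed

context VX begin

lemma s_contOn: "0 < c \<Longrightarrow> continuous_on {c..d} s"
  using s_cont by (intro continuous_at_imp_continuous_on) auto

lemma a_pos: assumes rs: "rs > 0" shows "a rs > 0"
proof (rule ccontr)
  assume "\<not> a rs > 0"
  then have a0: "a rs = 0" using a_nonneg[OF rs] by auto
  have mn: "\<forall>r>0. a rs \<le> a r" using a0 a_nonneg by auto
  have a10: "a1 rs = 0" using a1_zero_at_min[OF rs mn] .
  have zero: "a c = 0" if c: "0 < c" "c < rs" for c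
  proof -
    have "continuous_on {c..rs} (\<lambda>t. (s t)\<^sup>2)" using s_contOn[OF c(1)] by (intro continuous_intros)
    then obtain t0 where t0: "t0 \<in> {c..rs}" "\<forall>t\<in>{c..rs}. (s t)\<^sup>2 \<le> (s t0)\<^sup>2"
      using continuous_attains_sup[of "{c..rs}" "\<lambda>t. (s t)\<^sup>2"] c by auto
    define S where "S = (s t0)\<^sup>2"
    have S: "\<And>t. c \<le> t \<Longrightarrow> t \<le> rs \<Longrightarrow> (s t)\<^sup>2 \<le> S" using t0(2) unfolding S_def by auto
    define E where "E t = (a t)\<^sup>2 + (a1 t)\<^sup>2" for t
    define F where "F t = E t * exp ((1 + S) * t)" for t
    have "F c \<le> F rs"
    proof (rule mono_from_deriv[of c rs F "\<lambda>t. (2 * a t * a1 t + 2 * a1 t * a2 t + (1 + S) * E t) * exp ((1 + S) * t)"])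
      show "0 < c" "c \<le> rs" using c by auto
      fix t assume t: "c \<le> t" "t \<le> rs"
      then have tp: "t > 0" using c by auto
      have "(F has_real_derivative (2 * a t * a1 t + 2 * a1 t * a2 t + (1 + S) * E t) * exp ((1 + S) * t)) (at t)"
        unfolding F_def[abs_def] E_def[abs_def]
        by (auto intro!: derivative_eq_intros a_der[OF tp] a1_der[OF tp] simp: power2_eq_square algebra_simps)
      moreover have "2 * a t * a1 t + 2 * a1 t * a2 t + (1 + S) * E t \<ge> 0"
      proof -
        have h1: "2 * a t * a1 t \<ge> - ((a t)\<^sup>2 + (a1 t)\<^sup>2)"
          using zero_le_square[of "a t + a1 t"] by (simp add: power2_eq_square algebra_simps)
        have h1': "2 * a t * a1 t \<le> ((a t)\<^sup>2 + (a1 t)\<^sup>2)"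
          using zero_le_square[of "a t - a1 t"] by (simp add: power2_eq_square algebra_simps)
        have ss: "(s t)\<^sup>2 \<ge> 0" by simp
        have h2: "(s t)\<^sup>2 * (2 * a t * a1 t) \<ge> - ((s t)\<^sup>2 * ((a t)\<^sup>2 + (a1 t)\<^sup>2))"
          using mult_left_mono[OF h1 ss] by (simp add: algebra_simps)
        have h3: "(s t)\<^sup>2 * ((a t)\<^sup>2 + (a1 t)\<^sup>2) \<le> S * ((a t)\<^sup>2 + (a1 t)\<^sup>2)"
          using S[OF t] by (intro mult_right_mono) auto
        have h4: "(a1 t)\<^sup>2 / t \<ge> 0" using tp by auto
        have "2 * a1 t * a2 t = 2 * ((a1 t)\<^sup>2 / t) + (s t)\<^sup>2 * (2 * a t * a1 t)"
          unfolding a2_def by (simp add: power2_eq_square algebra_simps)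
        then show ?thesis unfolding E_def using h1 h2 h3 h4 by (simp add: algebra_simps)
      qed
      ultimately show "(F has_real_derivative (2 * a t * a1 t + 2 * a1 t * a2 t + (1 + S) * E t) * exp ((1 + S) * t)) (at t) \<and>
         (2 * a t * a1 t + 2 * a1 t * a2 t + (1 + S) * E t) * exp ((1 + S) * t) \<ge> 0" by auto
    qed
    moreover have "F rs = 0" unfolding F_def E_def using a0 a10 by simp
    ultimately have "E c \<le> 0" unfolding F_def by (simp add: mult_le_0_iff)
    then have "(a c)\<^sup>2 = 0" unfolding E_def using zero_le_power2[of "a c"] zero_le_power2[of "a1 c"] by linarith
    then show "a c = 0" by simp
  qed
  have "eventually (\<lambda>x. a x > 0) (at_right 0)" using order_tendstoD(1)[OF a_lim0, of 0] n1 by auto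
  then obtain b where b: "b > 0" "\<And>y. 0 < y \<Longrightarrow> y < b \<Longrightarrow> a y > 0"
    unfolding eventually_at_right_field by auto
  have "a (min (b/2) (rs/2)) > 0" using b rs by auto
  moreover have "a (min (b/2) (rs/2)) = 0" using zero[of "min (b/2) (rs/2)"] rs b by auto
  ultimately show False by auto
qed

definition "q t = a1 t / a t"

lemma q_der: assumes "t > 0" shows "(q has_real_derivative q t / t + (s t)\<^sup>2 - (q t)\<^sup>2) (at t)"
proof -
  have an: "a t \<noteq> 0" using a_pos[OF assms] by auto
  have "(q has_real_derivative (a2 t * a t - a1 t * a1 t) / (a t * a t)) (at t)"
    unfolding q_def[abs_def] using an
    by (auto intro!: derivative_eq_intros a_der[OF assms] a1_der[OF assms])
  moreover have "(a2 t * a t - a1 t * a1 t) / (a t * a t) = q t / t + (s t)\<^sup>2 - (q t)\<^sup>2"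
    unfolding q_def a2_def using an assms by (simp add: field_simps power2_eq_square)
  ultimately show ?thesis by simp
qed

lemma q_contOn: "0 < c \<Longrightarrow> continuous_on {c..d} q"
  using q_der by (intro continuous_at_imp_continuous_on) (meson DERIV_isCont atLeastAtMost_iff less_le_trans)

lemma a_lower_exp: "\<exists>R>0. \<exists>c0>0. \<forall>r\<ge>R. a r \<ge> c0 * exp (- (3/2) * r)"
proof -
  have "((\<lambda>r. (s r)\<^sup>2) \<longlongrightarrow> 1\<^sup>2) at_top" by (intro tendsto_intros s_lim_top)
  then have "eventually (\<lambda>r. (s r)\<^sup>2 < 2) at_top" using order_tendstoD(2) by fastforce
  then obtain R1 where R1: "\<And>r. r \<ge> R1 \<Longrightarrow> (s r)\<^sup>2 < 2" unfolding eventually_at_top_linorder by auto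
  define R0 where "R0 = max R1 1"
  have R0: "R0 > 0" "\<And>r. r \<ge> R0 \<Longrightarrow> (s r)\<^sup>2 < 2" using R1 unfolding R0_def by auto
  have qb: "q r \<ge> - 3/2" if r: "r \<ge> R0" for r
  proof (rule ccontr)
    assume "\<not> q r \<ge> - 3/2"
    then have qr: "q r < - 3/2" by auto
    define L where "L = (q r - 3/2) / 2"
    have L: "q r < L" "L < - 3/2" using qr unfolding L_def by auto
    have rp: "r > 0" using r R0 by auto
    have qdneg: "q t / t + (s t)\<^sup>2 - (q t)\<^sup>2 \<le> 2 - (q t)\<^sup>2" if "t \<ge> r" "q t < 0" for t
    proof -
      have "q t / t < 0" using that rp by (simp add: divide_neg_pos)
      moreover have "(s t)\<^sup>2 < 2" using R0(2) that r by auto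
      ultimately show ?thesis by auto
    qed
    have A: "q t < L" if t: "t \<ge> r" for t
    proof (rule ccontr)
      assume "\<not> q t < L"
      then have "L \<le> q t" by auto
      from first_hit[OF t q_contOn[OF rp] L(1) this]
      obtain T where T: "r < T" "T \<le> t" "q T = L" "\<And>x. r \<le> x \<Longrightarrow> x < T \<Longrightarrow> q x < L" by auto
      have "q T \<le> q r"
      proof (rule antimono_from_deriv[of r T q "\<lambda>x. q x / x + (s x)\<^sup>2 - (q x)\<^sup>2"])
        show "0 < r" "r \<le> T" using rp T by auto
        fix x assume x: "r \<le> x" "x \<le> T"
        have qx: "q x \<le> L"
        proof (cases "x < T")
          case True then show ?thesis using T(4)[of x] x by auto
        next
          case False then show ?thesis using T(3) x by auto
        qed
        then have "(q x)\<^sup>2 \<ge> 9/4" using L sq_ge[of "q x"] by auto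
        then have "q x / x + (s x)\<^sup>2 - (q x)\<^sup>2 \<le> 0" using qdneg[of x] x qx L by auto
        then show "(q has_real_derivative q x / x + (s x)\<^sup>2 - (q x)\<^sup>2) (at x) \<and> q x / x + (s x)\<^sup>2 - (q x)\<^sup>2 \<le> 0"
          using q_der[of x] x rp by auto
      qed
      then show False using T L by auto
    qed
    define p where "p t = - 1 / q t + t / 9" for t
    define tt where "tt = r + 9 * (- 1 / q r) + 9"
    have qrn: "- 1 / q r > 0" using qr by auto
    have "p tt \<le> p r"
    proof (rule antimono_from_deriv[of r tt p "\<lambda>x. (q x / x + (s x)\<^sup>2 - (q x)\<^sup>2) / (q x)\<^sup>2 + 1/9"])
      show "0 < r" using rp by auto
      show "r \<le> tt" unfolding tt_def using qrn by linarith
      fix x assume x: "r \<le> x" "x \<le> tt"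
      have qx: "q x < L" using A x by auto
      then have qn: "q x \<noteq> 0" using L by auto
      have q2: "(q x)\<^sup>2 \<ge> 9/4" using qx L sq_ge[of "q x"] by auto
      have xp: "x > 0" using x rp by auto
      have "(p has_real_derivative (q x / x + (s x)\<^sup>2 - (q x)\<^sup>2) / (q x)\<^sup>2 + 1/9) (at x)"
        unfolding p_def[abs_def] using qn
        by (auto intro!: derivative_eq_intros q_der[OF xp] simp: power2_eq_square field_simps)
      moreover have "(q x / x + (s x)\<^sup>2 - (q x)\<^sup>2) / (q x)\<^sup>2 + 1/9 \<le> 0"
      proof -
        have "q x / x + (s x)\<^sup>2 - (q x)\<^sup>2 \<le> 2 - (q x)\<^sup>2" using qdneg[of x] x qx L by auto
        also have "\<dots> \<le> - (q x)\<^sup>2 / 9" using q2 by auto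
        finally have "(q x / x + (s x)\<^sup>2 - (q x)\<^sup>2) / (q x)\<^sup>2 \<le> (- (q x)\<^sup>2 / 9) / (q x)\<^sup>2"
          using qn by (intro divide_right_mono) auto
        also have "\<dots> = - 1/9" using qn by (simp add: field_simps)
        finally show ?thesis by simp
      qed
      ultimately show "(p has_real_derivative (q x / x + (s x)\<^sup>2 - (q x)\<^sup>2) / (q x)\<^sup>2 + 1/9) (at x) \<and>
          (q x / x + (s x)\<^sup>2 - (q x)\<^sup>2) / (q x)\<^sup>2 + 1/9 \<le> 0" by auto
    qed
    moreover have "q tt < 0" using A[of tt] L qrn unfolding tt_def by auto
    ultimately show False unfolding p_def tt_def by (simp add: field_simps)
  qed
  define f where "f t = a t * exp ((3/2) * t)" for t
  have "f R0 \<le> f r" if r: "r \<ge> R0" for r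
  proof (rule mono_from_deriv[of R0 r f "\<lambda>t. a t * (q t + 3/2) * exp ((3/2) * t)"])
    show "0 < R0" "R0 \<le> r" using R0 r by auto
    fix t assume t: "R0 \<le> t" "t \<le> r"
    then have tp: "t > 0" using R0 by auto
    have an: "a t > 0" using a_pos[OF tp] .
    have "(f has_real_derivative a1 t * exp ((3/2) * t) + a t * (exp ((3/2) * t) * (3/2))) (at t)"
      unfolding f_def[abs_def] by (auto intro!: derivative_eq_intros a_der[OF tp])
    moreover have "a1 t * exp ((3/2) * t) + a t * (exp ((3/2) * t) * (3/2)) = a t * (q t + 3/2) * exp ((3/2) * t)"
      unfolding q_def using an by (simp add: field_simps)
    moreover have "a t * (q t + 3/2) * exp ((3/2) * t) \<ge> 0" using an qb[OF t(1)] by auto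
    ultimately show "(f has_real_derivative a t * (q t + 3/2) * exp ((3/2) * t)) (at t) \<and> a t * (q t + 3/2) * exp ((3/2) * t) \<ge> 0"
      by auto
  qed
  then have "a r \<ge> f R0 * exp (- (3/2) * r)" if "r \<ge> R0" for r
    using that unfolding f_def by (simp add: exp_minus field_simps)
  moreover have "f R0 > 0" unfolding f_def using a_pos[OF R0(1)] by auto
  ultimately show ?thesis using R0 by blast
qed

end

context VX begin

lemma cc_nonneg: "cc \<ge> 0" unfolding cc_def by auto

lemma W2_bound: "(Wf r)\<^sup>2 - 2 * Qf r * (y r)\<^sup>2 \<ge> Qf r * (\<gamma> * (s r)\<^sup>2 / 2) + cc\<^sup>2 * (v r)^4"
proof -
  have Q0: "Qf r \<ge> 0" unfolding Qf_def using gpos by auto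
  have "(Wf r)\<^sup>2 - 2 * Qf r * (y r)\<^sup>2 = Qf r * (\<gamma> * (s r)\<^sup>2 / 2) + 2 * Qf r * (cc * (v r)\<^sup>2) + cc\<^sup>2 * (v r)^4"
    unfolding Wf_def Qf_def by (simp add: power2_eq_square eval_nat_numeral algebra_simps)
  moreover have "2 * Qf r * (cc * (v r)\<^sup>2) \<ge> 0" using Q0 cc_nonneg by auto
  ultimately show ?thesis by linarith
qed

definition "T1 r = \<gamma> * r * (s r)\<^sup>2 * (v r)\<^sup>2 * ((y r - z r) * y r) / (y r)\<^sup>2"
definition "T2 r = r * (u r)\<^sup>2 * ((Wf r)\<^sup>2 - 2 * Qf r * (y r)\<^sup>2) / (y r)\<^sup>2"

lemma D_split: "y r \<noteq> 0 \<Longrightarrow> D r = T1 r + T2 r"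
  unfolding D_def T1_def T2_def by (simp add: power2_eq_square field_simps)

lemma T2_lower: assumes "r > 0" "y r \<noteq> 0"
  shows "T2 r \<ge> r * (u r)\<^sup>2 * (Qf r * (\<gamma> * (s r)\<^sup>2 / 2) + cc\<^sup>2 * (v r)^4) / (y r)\<^sup>2"
  unfolding T2_def using assms W2_bound[of r]
  by (intro divide_right_mono mult_left_mono) auto

lemma T2_nonneg: assumes "r > 0" "y r \<noteq> 0" shows "T2 r \<ge> 0"
proof -
  have "Qf r \<ge> 0" unfolding Qf_def using gpos by auto
  then have "0 \<le> r * (u r)\<^sup>2 * (Qf r * (\<gamma> * (s r)\<^sup>2 / 2) + cc\<^sup>2 * (v r)^4) / (y r)\<^sup>2"
    using assms gpos by (intro divide_nonneg_nonneg mult_nonneg_nonneg add_nonneg_nonneg) auto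
  then show ?thesis using T2_lower[OF assms] by linarith
qed

definition "Hyp \<longleftrightarrow> (\<forall>r>0. y r \<noteq> 0 \<and> (y r - z r) * y r \<ge> 0)"

lemma T1_nonneg: assumes "Hyp" "r > 0" shows "T1 r \<ge> 0"
proof -
  have X: "0 \<le> (y r - z r) * y r" using assms unfolding Hyp_def by auto
  have P: "0 \<le> \<gamma> * r * (s r)\<^sup>2 * (v r)\<^sup>2" using assms gpos by auto
  show ?thesis unfolding T1_def by (rule divide_nonneg_nonneg[OF mult_nonneg_nonneg[OF P X]]) simp
qed

lemma D_nonneg: assumes "Hyp" "r > 0" shows "D r \<ge> 0"
  using D_split T1_nonneg T2_nonneg assms unfolding Hyp_def by force

lemma Bu_mono: assumes H: "Hyp" and pq: "0 < p1" "p1 \<le> q1" shows "Bu p1 \<le> Bu q1"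
proof -
  have "B p1 \<le> B q1"
  proof (rule mono_from_deriv[OF pq])
    fix t assume t: "p1 \<le> t" "t \<le> q1"
    then have tp: "t > 0" using pq by auto
    then show "(B has_real_derivative D t) (at t) \<and> D t \<ge> 0"
      using B_der[OF tp] D_nonneg[OF H tp] H unfolding Hyp_def by auto
  qed
  then show ?thesis using B_Bu H pq unfolding Hyp_def by force
qed

lemma Bu_zero: assumes H: "Hyp" and l0: "(Bu \<longlongrightarrow> 0) (at_right 0)" and l1: "(Bu \<longlongrightarrow> 0) at_top"
  and r: "r > 0" shows "Bu r = 0"
proof -
  have ev0: "eventually (\<lambda>d. Bu d \<le> Bu r) (at_right 0)"
    unfolding eventually_at_right_field using Bu_mono[OF H] r by (intro exI[of _ r]) auto
  have "0 \<le> Bu r" using tendsto_upperbound[OF l0 ev0] by simp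
  moreover have ev1: "eventually (\<lambda>d. Bu r \<le> Bu d) at_top"
    unfolding eventually_at_top_linorder using Bu_mono[OF H] r by (intro exI[of _ r]) auto
  have "Bu r \<le> 0" using tendsto_lowerbound[OF l1 ev1] by simp
  ultimately show ?thesis by auto
qed

lemma D_zero: assumes H: "Hyp" and l0: "(Bu \<longlongrightarrow> 0) (at_right 0)" and l1: "(Bu \<longlongrightarrow> 0) at_top"
  and r: "r > 0" shows "D r = 0"
proof -
  have "((\<lambda>_. 0::real) has_real_derivative D r) (at r)"
  proof (rule has_field_derivative_transform_within_open[of B _ r "{0<..}"])
    show "(B has_real_derivative D r) (at r)" using B_der[OF r] H r unfolding Hyp_def by auto
    show "open ({0<..} :: real set)" by simp
    show "r \<in> {0<..}" using r by simp
    fix x :: real assume "x \<in> {0<..}"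
    then have "x > 0" by simp
    then show "B x = 0" using B_Bu[of x] Bu_zero[OF H l0 l1, of x] H unfolding Hyp_def by auto
  qed
  then show ?thesis using DERIV_const DERIV_unique by blast
qed

lemma u_zero_pt: assumes H: "Hyp" and D0: "D r = 0" and r: "r > 0" and sr: "s r \<noteq> 0" shows "u r = 0"
proof -
  have yr: "y r \<noteq> 0" using H r unfolding Hyp_def by auto
  have "T2 r = 0" using D_split[OF yr] D0 T1_nonneg[OF H r] T2_nonneg[OF r yr] by auto
  then have "r * (u r)\<^sup>2 * (Qf r * (\<gamma> * (s r)\<^sup>2 / 2) + cc\<^sup>2 * (v r)^4) / (y r)\<^sup>2 \<le> 0"
    using T2_lower[OF r yr] by auto
  moreover have "Qf r * (\<gamma> * (s r)\<^sup>2 / 2) > 0"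
    unfolding Qf_def using gpos sr yr by (intro mult_pos_pos add_pos_pos) auto
  moreover have "cc\<^sup>2 * (v r)^4 \<ge> 0" by auto
  ultimately have "(u r)\<^sup>2 \<le> 0" using r yr
    by (smt (verit, ccfv_SIG) divide_pos_pos mult_pos_pos zero_less_power2 zero_le_power2)
  then show ?thesis by auto
qed

lemma v_zero_pt: assumes H: "Hyp" and D0: "D r = 0" and r: "r > 0" and sr: "s r \<noteq> 0"
  and xr: "y r \<noteq> z r" shows "v r = 0"
proof -
  have yr: "y r \<noteq> 0" using H r unfolding Hyp_def by auto
  have "T1 r = 0" using D_split[OF yr] D0 T1_nonneg[OF H r] T2_nonneg[OF r yr] by auto
  moreover have "(y r - z r) * y r \<noteq> 0" using yr xr by auto
  ultimately show ?thesis unfolding T1_def using gpos r sr yr by auto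
qed

lemma u0_zero: assumes e: "e > 0" and Z: "\<And>r. 0 < r \<Longrightarrow> r < e \<Longrightarrow> u r = 0" shows "u0 = 0"
proof -
  have "eventually (\<lambda>r. eu r > -1/2) (at_right 0)" using order_tendstoD(1)[OF eu0] by auto
  then obtain b where b: "b > 0" "\<And>r. 0 < r \<Longrightarrow> r < b \<Longrightarrow> eu r > -1/2"
    unfolding eventually_at_right_field by auto
  define r where "r = min (b/2) (e/2)"
  have r: "0 < r" "r < b" "r < e" using b e unfolding r_def by auto
  have "u0 * r powr k * (1 + eu r) = 0" using Z[OF r(1) r(3)] uvform r by auto
  moreover have "1 + eu r \<noteq> 0" using b(2)[OF r(1,2)] by auto
  ultimately show ?thesis using r by auto
qed

lemma v0_zero: assumes e: "e > 0" and Z: "\<And>r. 0 < r \<Longrightarrow> r < e \<Longrightarrow> v r = 0" shows "v0 = 0"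
proof -
  have "eventually (\<lambda>r. ev r > -1/2) (at_right 0)" using order_tendstoD(1)[OF ev0] by auto
  then obtain b where b: "b > 0" "\<And>r. 0 < r \<Longrightarrow> r < b \<Longrightarrow> ev r > -1/2"
    unfolding eventually_at_right_field by auto
  define r where "r = min (b/2) (e/2)"
  have r: "0 < r" "r < b" "r < e" using b e unfolding r_def by auto
  have "v0 * r powr k * (1 + ev r) = 0" using Z[OF r(1) r(3)] uvform r by auto
  moreover have "1 + ev r \<noteq> 0" using b(2)[OF r(1,2)] by auto
  ultimately show ?thesis using r by auto
qed

lemma ry_eq: "r > 0 \<Longrightarrow> r * y r = \<gamma> * a r - K / 2"
  unfolding y_eq a_def by (simp add: field_simps)

lemma ry_lim0: "((\<lambda>r. r * y r) \<longlongrightarrow> - of_int m / 2) (at_right 0)"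
proof -
  have "((\<lambda>r. \<gamma> * a r - K / 2) \<longlongrightarrow> \<gamma> * of_int n - K / 2) (at_right 0)"
    by (intro tendsto_intros a_lim0)
  moreover have "\<gamma> * of_int n - K / 2 = - of_int m / 2" unfolding K_def by (simp add: field_simps)
  moreover have "eventually (\<lambda>r. \<gamma> * a r - K / 2 = r * y r) (at_right 0)"
    using ry_eq by (auto simp: eventually_at_right_field intro!: exI[of _ 1])
  ultimately show ?thesis by (simp add: tendsto_cong)
qed

lemma ry_limtop: "((\<lambda>r. r * y r) \<longlongrightarrow> - K / 2) at_top"
proof -
  have "((\<lambda>r. \<gamma> * a r - K / 2) \<longlongrightarrow> \<gamma> * 0 - K / 2) at_top"
    by (intro tendsto_intros a_liminf)
  moreover have "eventually (\<lambda>r. \<gamma> * a r - K / 2 = r * y r) at_top"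
    using eventually_gt_at_top[of 0] by eventually_elim (simp add: ry_eq)
  ultimately show ?thesis by (simp add: tendsto_cong)
qed

lemma v_zero_from_u: assumes H: "Hyp" and m0: "m \<noteq> 0" and e: "e > 0"
  and Z: "\<And>r. 0 < r \<Longrightarrow> r < e \<Longrightarrow> u r = 0" shows "v0 = 0"
proof -
  have yne: "\<And>r. r > 0 \<Longrightarrow> y r \<noteq> 0" using H unfolding Hyp_def by auto
  have const: "v r / y r = v (e/2) / y (e/2)" if r: "0 < r" "r < e" for r
  proof (rule DERIV_isconst3[of 0 e r "e/2" "\<lambda>x. v x / y x"])
    show "0 < e" "r \<in> {0<..<e}" "e/2 \<in> {0<..<e}" using r e by auto
    fix x assume x: "x \<in> {0<..<e}"
    then have xp: "x > 0" by auto
    have "((\<lambda>x. v x / y x) has_real_derivative (deriv v x * y x - v x * y1 x) / (y x * y x)) (at x)"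
      using yne[OF xp] by (auto intro!: derivative_eq_intros v_der[OF xp] y_der[OF xp])
    moreover have "deriv v x * y x - v x * y1 x = 0" using eq2'[OF xp] Z[of x] x by auto
    ultimately show "((\<lambda>x. v x / y x) has_real_derivative 0) (at x)" by simp
  qed
  define C where "C = v (e/2) / y (e/2)"
  have eq: "eventually (\<lambda>r. C * (r * y r) = v0 * r powr (k + 1) * (1 + ev r)) (at_right 0)"
    unfolding eventually_at_right_field
  proof (intro exI[of _ e] conjI allI impI)
    show "e > 0" using e by simp
    fix r :: real assume r: "r > 0" "r < e"
    have "C * (r * y r) = r * v r" using const[OF r] yne[OF r(1)] unfolding C_def by (simp add: field_simps)
    also have "\<dots> = v0 * r powr (k + 1) * (1 + ev r)" using uvform r by (simp add: powr_add)
    finally show "C * (r * y r) = v0 * r powr (k + 1) * (1 + ev r)" .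
  qed
  have l1: "((\<lambda>r. C * (r * y r)) \<longlongrightarrow> C * (- of_int m / 2)) (at_right 0)" by (intro tendsto_intros ry_lim0)
  have "((\<lambda>r. r powr (k + 1)) \<longlongrightarrow> 0) (at_right 0)" using kbig by real_asymp
  then have "((\<lambda>r. v0 * r powr (k + 1) * (1 + ev r)) \<longlongrightarrow> v0 * 0 * (1 + 0)) (at_right 0)"
    by (intro tendsto_intros ev0)
  then have l2: "((\<lambda>r. C * (r * y r)) \<longlongrightarrow> 0) (at_right 0)" using eq by (simp add: tendsto_cong)
  have "C * (- of_int m / 2) = 0" using tendsto_unique[OF _ l1 l2] by simp
  then have C0: "C = 0" using m0 by simp
  have "v r = 0" if "0 < r" "r < e" for r using const[OF that] yne[OF that(1)] C0 unfolding C_def by auto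
  then show ?thesis using v0_zero e by blast
qed

end


lemma lim_top1a: "(0::real) < c \<Longrightarrow> ((\<lambda>r::real. r\<^sup>2 * (r powr p * exp (- c * r))\<^sup>2) \<longlongrightarrow> 0) at_top"
  by real_asymp
lemma lim_top1: "(0::real) < c \<Longrightarrow> ((\<lambda>r::real. r\<^sup>2 * (C * r powr p * exp (- c * r))\<^sup>2) \<longlongrightarrow> 0) at_top"
proof -
  assume c: "0 < c"
  have "((\<lambda>r. C\<^sup>2 * (r\<^sup>2 * (r powr p * exp (- c * r))\<^sup>2)) \<longlongrightarrow> C\<^sup>2 * 0) at_top"
    by (intro tendsto_mult tendsto_const lim_top1a c)
  then show ?thesis by (simp add: power_mult_distrib algebra_simps)
qed
lemma lim_top2: "(0::real) < c \<Longrightarrow> ((\<lambda>r::real. C * r powr p * exp (- c * r)) \<longlongrightarrow> 0) at_top"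
  by real_asymp
lemma lim_top3a: "((\<lambda>r::real. r\<^sup>2 * (r powr p * exp (- 1 * r))\<^sup>2 / exp (- (3/2) * r)) \<longlongrightarrow> 0) at_top"
  by real_asymp
lemma lim_top3: "(0::real) < c0 \<Longrightarrow> ((\<lambda>r::real. r\<^sup>2 * (C * r powr p * exp (- 1 * r))\<^sup>2 / (c0 * exp (- (3/2) * r))) \<longlongrightarrow> 0) at_top"
proof -
  assume c: "0 < c0"
  have "((\<lambda>r. C\<^sup>2 / c0 * (r\<^sup>2 * (r powr p * exp (- 1 * r))\<^sup>2 / exp (- (3/2) * r))) \<longlongrightarrow> C\<^sup>2 / c0 * 0) at_top"
    by (intro tendsto_mult tendsto_const lim_top3a)
  then show ?thesis by (simp add: power_mult_distrib algebra_simps)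
qed
lemma lim_01: "(k::real) > - 1/2 \<Longrightarrow> ((\<lambda>r::real. (r powr k)\<^sup>2 * r\<^sup>2) \<longlongrightarrow> 0) (at_right 0)"
  by real_asymp
lemma lim_02: "(k::real) > - 1/2 \<Longrightarrow> ((\<lambda>r::real. (r powr k)^4 * r\<^sup>2) \<longlongrightarrow> 0) (at_right 0)"
  by real_asymp
lemma lim_03: "(k::real) > 0 \<Longrightarrow> ((\<lambda>r::real. (r powr k)^4) \<longlongrightarrow> 0) (at_right 0)"
  by real_asymp
lemma lim_04: "(k::real) < 0 \<Longrightarrow> c > 0 \<Longrightarrow> filterlim (\<lambda>r::real. c * r powr (6*k) - C * r powr (4*k) - K0) at_top (at_right 0)"
  by real_asymp
lemma lim_05: "c > 0 \<Longrightarrow> filterlim (\<lambda>r::real. - c * ln r - K0) at_top (at_right 0)"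
  by real_asymp

lemma alg_m0:
  fixes r g u0 v0 s0 eu ev es P Rn w cc :: real
  assumes "r > 0" "g > 0"
  shows "- (u0 * (1 + eu)) * (v0 * (1 + ev)) * (g * s0\<^sup>2 * (1 + es)\<^sup>2 / 2 * (P\<^sup>2 * r\<^sup>2) * Rn\<^sup>2
        + v0\<^sup>2 * (1 + ev)\<^sup>2 * (cc * P^4)) / (g * w)
     = - r * (u0 * P * (1 + eu)) * (v0 * P * (1 + ev)) * (g * (s0 * (r * Rn) * (1 + es))\<^sup>2 / 2
        + cc * (v0 * P * (1 + ev))\<^sup>2) / (r * (g * w))"
  using assms by (cases "w = 0") (simp_all add: field_simps power2_eq_square eval_nat_numeral)

lemma alg_cancel: fixes r U V X G :: real assumes "r \<noteq> 0"
  shows "- r * U * V * X / (r * G) = - (U * V * X) / G"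
  using assms by (cases "G = 0") (simp_all add: field_simps)

context VX begin

lemma uv_bound_top: "eventually (\<lambda>r. norm (r\<^sup>2 * (u r * v r)) \<le> r\<^sup>2 * (Cw * r powr pw * exp (- sqrt \<gamma> * r))\<^sup>2) at_top"
  using uvdecay
proof eventually_elim
  case (elim r)
  have "\<bar>u r\<bar> * \<bar>v r\<bar> \<le> (Cw * r powr pw * exp (- sqrt \<gamma> * r)) * (Cw * r powr pw * exp (- sqrt \<gamma> * r))"
    using elim by (intro mult_mono) auto
  then have "r\<^sup>2 * (\<bar>u r\<bar> * \<bar>v r\<bar>) \<le> r\<^sup>2 * (Cw * r powr pw * exp (- sqrt \<gamma> * r))\<^sup>2"
    by (intro mult_left_mono) (auto simp: power2_eq_square)
  then show ?case by (simp add: abs_mult)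
qed

lemma uv_top: "((\<lambda>r. r\<^sup>2 * (u r * v r)) \<longlongrightarrow> 0) at_top"
  by (rule Lim_null_comparison[OF uv_bound_top]) (rule lim_top1, use gpos in simp)

lemma v_top: "(v \<longlongrightarrow> 0) at_top"
proof (rule Lim_null_comparison)
  show "eventually (\<lambda>r. norm (v r) \<le> Cw * r powr pw * exp (- sqrt \<gamma> * r)) at_top"
    using uvdecay by eventually_elim auto
  show "((\<lambda>r. Cw * r powr pw * exp (- sqrt \<gamma> * r)) \<longlongrightarrow> 0) at_top" by (rule lim_top2) (use gpos in simp)
qed

definition "Xf r = \<gamma> * (s r)\<^sup>2 / 2 + cc * (v r)\<^sup>2"

lemma Xf_top: "(Xf \<longlongrightarrow> \<gamma> * 1\<^sup>2 / 2 + cc * 0\<^sup>2) at_top"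
  unfolding Xf_def[abs_def] by (intro tendsto_intros s_lim_top v_top) auto

lemma Bu_top_form: "r > 0 \<Longrightarrow> Bu r = - (r\<^sup>2 * (u r * v r)) * Xf r / (r * y r)"
  unfolding Bu_def Xf_def by (cases "y r = 0") (simp_all add: field_simps power2_eq_square)

lemma Bu_lim_top: assumes "K \<noteq> 0" shows "(Bu \<longlongrightarrow> 0) at_top"
proof -
  have "((\<lambda>r. - (r\<^sup>2 * (u r * v r)) * Xf r / (r * y r)) \<longlongrightarrow> - 0 * (\<gamma> * 1\<^sup>2 / 2 + cc * 0\<^sup>2) / (- K / 2)) at_top"
    using assms by (intro tendsto_intros uv_top Xf_top ry_limtop) auto
  moreover have "eventually (\<lambda>r. - (r\<^sup>2 * (u r * v r)) * Xf r / (r * y r) = Bu r) at_top"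
    using eventually_gt_at_top[of 0] by eventually_elim (simp add: Bu_top_form)
  ultimately show ?thesis by (simp add: tendsto_cong)
qed

lemma Bu_lim_top_edge: assumes g1: "\<gamma> = 1" and K0: "K = 0" shows "(Bu \<longlongrightarrow> 0) at_top"
proof -
  obtain R c0 where Rc: "R > 0" "c0 > 0" "\<And>r. r \<ge> R \<Longrightarrow> a r \<ge> c0 * exp (- (3/2) * r)"
    using a_lower_exp by auto
  have ry: "r > 0 \<Longrightarrow> r * y r = a r" for r using ry_eq[of r] g1 K0 by simp
  have lim: "((\<lambda>r. r\<^sup>2 * (u r * v r) / a r) \<longlongrightarrow> 0) at_top"
  proof (rule Lim_null_comparison)
    show "eventually (\<lambda>r. norm (r\<^sup>2 * (u r * v r) / a r) \<le>
        r\<^sup>2 * (Cw * r powr pw * exp (- 1 * r))\<^sup>2 / (c0 * exp (- (3/2) * r))) at_top"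
      using uv_bound_top eventually_ge_at_top[of R]
    proof eventually_elim
      case (elim r)
      have rp: "r > 0" using elim Rc by auto
      have ap: "a r \<ge> c0 * exp (- (3/2) * r)" using Rc(3) elim by auto
      have cp: "c0 * exp (- (3/2) * r) > 0" using Rc by auto
      have "norm (r\<^sup>2 * (u r * v r) / a r) = norm (r\<^sup>2 * (u r * v r)) / a r"
        using ap cp by (simp add: abs_div)
      also have "\<dots> \<le> r\<^sup>2 * (Cw * r powr pw * exp (- 1 * r))\<^sup>2 / a r"
        using elim g1 ap cp by (intro divide_right_mono) auto
      also have "\<dots> \<le> r\<^sup>2 * (Cw * r powr pw * exp (- 1 * r))\<^sup>2 / (c0 * exp (- (3/2) * r))"
        using ap cp by (intro divide_left_mono) auto
      finally show ?case .
    qed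
    show "((\<lambda>r. r\<^sup>2 * (Cw * r powr pw * exp (- 1 * r))\<^sup>2 / (c0 * exp (- (3/2) * r))) \<longlongrightarrow> 0) at_top"
      by (rule lim_top3) (rule Rc(2))
  qed
  have "((\<lambda>r. - (r\<^sup>2 * (u r * v r) / a r) * Xf r) \<longlongrightarrow> - 0 * (\<gamma> * 1\<^sup>2 / 2 + cc * 0\<^sup>2)) at_top"
    by (intro tendsto_intros lim Xf_top)
  moreover have "eventually (\<lambda>r. - (r\<^sup>2 * (u r * v r) / a r) * Xf r = Bu r) at_top"
    using eventually_gt_at_top[of 0] by eventually_elim (simp add: Bu_top_form ry)
  ultimately show ?thesis by (simp add: tendsto_cong)
qed

lemma Bu_lim0_mne0: assumes m0: "m \<noteq> 0" shows "(Bu \<longlongrightarrow> 0) (at_right 0)"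
proof -
  define F where "F r = - (u0 * (1 + eu r)) * (v0 * (1 + ev r)) *
      ((r powr k)\<^sup>2 * r\<^sup>2 * (\<gamma> * (s r)\<^sup>2 / 2) + cc * v0\<^sup>2 * (1 + ev r)\<^sup>2 * ((r powr k)^4 * r\<^sup>2)) / (r * y r)" for r
  have "(F \<longlongrightarrow> - (u0 * (1 + 0)) * (v0 * (1 + 0)) *
      (0 * (\<gamma> * 0\<^sup>2 / 2) + cc * v0\<^sup>2 * (1 + 0)\<^sup>2 * 0) / (- of_int m / 2)) (at_right 0)"
    unfolding F_def[abs_def] using m0
    by (intro tendsto_intros lim_01[OF kbig] lim_02[OF kbig] s_lim0 eu0 ev0 ry_lim0) auto
  moreover have "eventually (\<lambda>r. F r = Bu r) (at_right 0)"
    unfolding eventually_at_right_field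
  proof (intro exI[of _ 1] conjI allI impI)
    fix r :: real assume r: "r > 0" "r < 1"
    have uv: "u r = u0 * r powr k * (1 + eu r)" "v r = v0 * r powr k * (1 + ev r)" using uvform r by auto
    show "F r = Bu r" unfolding F_def Bu_def uv using r
      by (cases "y r = 0") (simp_all add: field_simps power2_eq_square eval_nat_numeral)
  qed simp
  ultimately show ?thesis by (simp add: tendsto_cong)
qed

lemma yr_m0: assumes m0: "m = 0" and r: "r > 0" shows "y r / r = \<gamma> * (z0 + ez r)"
proof -
  have "z r = of_int n / r + z0 * r + r * ez r" using zform r by auto
  then show ?thesis unfolding y_eq K_def using m0 r by (simp add: field_simps power2_eq_square)
qed

lemma Bu_lim0_m0: assumes m0: "m = 0" and ck: "cc = 0 \<or> k > 0" shows "(Bu \<longlongrightarrow> 0) (at_right 0)"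
proof -
  have cP: "((\<lambda>r. cc * (r powr k)^4) \<longlongrightarrow> 0) (at_right 0)"
  proof (cases "cc = 0")
    case True then show ?thesis by simp
  next
    case False then have "k > 0" using ck by auto
    then show ?thesis using tendsto_mult_right_zero[OF lim_03] by (metis mult.commute)
  qed
  have z0n: "z0 \<noteq> 0" using z0_neg by auto
  define F where "F r = - (u0 * (1 + eu r)) * (v0 * (1 + ev r)) *
      (\<gamma> * s0\<^sup>2 * (1 + es r)\<^sup>2 / 2 * ((r powr k)\<^sup>2 * r\<^sup>2) * (r ^ (nat n - 1))\<^sup>2
        + v0\<^sup>2 * (1 + ev r)\<^sup>2 * (cc * (r powr k)^4)) / (\<gamma> * (z0 + ez r))" for r
  have "(F \<longlongrightarrow> - (u0 * (1 + 0)) * (v0 * (1 + 0)) *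
      (\<gamma> * s0\<^sup>2 * (1 + 0)\<^sup>2 / 2 * 0 * (0 ^ (nat n - 1))\<^sup>2 + v0\<^sup>2 * (1 + 0)\<^sup>2 * 0) / (\<gamma> * (z0 + 0))) (at_right 0)"
    unfolding F_def[abs_def] using z0n gpos
    by (intro tendsto_intros lim_01[OF kbig] cP es0 eu0 ev0 ez0) (auto simp: tendsto_ident_at)
  moreover have "eventually (\<lambda>r. F r = Bu r) (at_right 0)"
    unfolding eventually_at_right_field
  proof (intro exI[of _ 1] conjI allI impI)
    fix r :: real assume r: "r > 0" "r < 1"
    have uv: "u r = u0 * r powr k * (1 + eu r)" "v r = v0 * r powr k * (1 + ev r)" using uvform r by auto
    have sr: "s r = s0 * (r * r ^ (nat n - 1)) * (1 + es r)"
    proof -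
      have "nat n = Suc (nat n - 1)" using n1 by simp
      then have "r ^ nat n = r * r ^ (nat n - 1)" by (metis power_Suc)
      then show ?thesis using sform r by auto
    qed
    have yr: "y r = r * (\<gamma> * (z0 + ez r))" using yr_m0[OF m0 r(1)] r by (simp add: field_simps)
    show "F r = Bu r" unfolding F_def Bu_def uv sr yr
      by (rule alg_m0) (use r gpos in auto)
  qed simp
  ultimately show ?thesis by (simp add: tendsto_cong)
qed

lemma Bu_le0: assumes H: "Hyp" and l1: "(Bu \<longlongrightarrow> 0) at_top" and r: "r > 0" shows "Bu r \<le> 0"
proof -
  have ev1: "eventually (\<lambda>d. Bu r \<le> Bu d) at_top"
    unfolding eventually_at_top_linorder using Bu_mono[OF H] r by (intro exI[of _ r]) auto
  show ?thesis using tendsto_lowerbound[OF l1 ev1] by simp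
qed

lemma small_k_False:
  assumes H: "Hyp" and l1: "(Bu \<longlongrightarrow> 0) at_top" and m0: "m = 0" and nl: "nl"
    and k0: "k \<le> 0" and u0n: "u0 \<noteq> 0" and v0n: "v0 \<noteq> 0"
  shows False
proof -
  have cc2: "cc = 2" unfolding cc_def using nl by simp
  have z0n: "z0 < 0" using z0_neg .
  have ev: "eventually (\<lambda>r. \<bar>eu r\<bar> < 1/2 \<and> \<bar>ev r\<bar> < 1/2 \<and> \<bar>ez r\<bar> < - z0 / 2 \<and> \<bar>s r\<bar> < 1) (at_right 0)"
  proof -
    have "((\<lambda>r. \<bar>eu r\<bar>) \<longlongrightarrow> \<bar>0\<bar>) (at_right 0)" "((\<lambda>r. \<bar>ev r\<bar>) \<longlongrightarrow> \<bar>0\<bar>) (at_right 0)"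
      "((\<lambda>r. \<bar>ez r\<bar>) \<longlongrightarrow> \<bar>0\<bar>) (at_right 0)" "((\<lambda>r. \<bar>s r\<bar>) \<longlongrightarrow> \<bar>0\<bar>) (at_right 0)"
      by (intro tendsto_intros eu0 ev0 ez0 s_lim0)+
    note t = this
    have e1: "eventually (\<lambda>r. \<bar>eu r\<bar> < 1/2) (at_right 0)" using order_tendstoD(2)[OF t(1), of "1/2"] by simp
    have e2: "eventually (\<lambda>r. \<bar>ev r\<bar> < 1/2) (at_right 0)" using order_tendstoD(2)[OF t(2), of "1/2"] by simp
    have e3: "eventually (\<lambda>r. \<bar>ez r\<bar> < - z0 / 2) (at_right 0)" using order_tendstoD(2)[OF t(3), of "- z0 / 2"] z0n by simp
    have e4: "eventually (\<lambda>r. \<bar>s r\<bar> < 1) (at_right 0)" using order_tendstoD(2)[OF t(4), of 1] by simp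
    show ?thesis by (intro eventually_conj e1 e2 e3 e4)
  qed
  then obtain d0 where d0: "d0 > 0" "\<And>r. 0 < r \<Longrightarrow> r < d0 \<Longrightarrow>
      \<bar>eu r\<bar> < 1/2 \<and> \<bar>ev r\<bar> < 1/2 \<and> \<bar>ez r\<bar> < - z0 / 2 \<and> \<bar>s r\<bar> < 1"
    unfolding eventually_at_right_field by auto
  define d where "d = min (d0/2) (1/2)"
  have d: "0 < d" "d < d0" "d < 1" using d0 unfolding d_def by auto
  define c1 where "c1 = u0\<^sup>2 * v0^4 / (36 * \<gamma>\<^sup>2 * z0\<^sup>2)"
  have c1: "c1 > 0" unfolding c1_def using u0n v0n z0n gpos by auto
  define C2 where "C2 = 9/4 * \<bar>u0 * v0\<bar> * (\<gamma>/2 + 9/2 * v0\<^sup>2) * 2 / (\<gamma> * (- z0))"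
  have props: "r powr k \<ge> 1 \<and> y r = r * (\<gamma> * (z0 + ez r)) \<and> \<gamma> * (- z0) / 2 \<le> \<gamma> * \<bar>z0 + ez r\<bar>
      \<and> (y r)\<^sup>2 \<le> 9/4 * \<gamma>\<^sup>2 * z0\<^sup>2 * r\<^sup>2 \<and> y r \<noteq> 0"
    if r: "0 < r" "r \<le> d" for r
  proof -
    have rr: "r < d0" "r < 1" using r d by auto
    have P1: "r powr k \<ge> 1" using powr_mono2'[OF k0 r(1), of 1] rr by simp
    have yr: "y r = r * (\<gamma> * (z0 + ez r))" using yr_m0[OF m0 r(1)] r by (simp add: field_simps)
    have ez: "\<bar>ez r\<bar> < - z0 / 2" using d0(2)[OF r(1) rr(1)] by auto
    have lo: "- z0 / 2 \<le> \<bar>z0 + ez r\<bar>" using ez z0n by auto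
    have hi: "\<bar>z0 + ez r\<bar> \<le> 3/2 * (- z0)" using ez z0n by auto
    have "(y r)\<^sup>2 = r\<^sup>2 * \<gamma>\<^sup>2 * \<bar>z0 + ez r\<bar>\<^sup>2" unfolding yr by (simp add: power2_eq_square algebra_simps)
    also have "\<dots> \<le> r\<^sup>2 * \<gamma>\<^sup>2 * (3/2 * (- z0))\<^sup>2"
      using hi by (intro mult_left_mono power_mono) auto
    finally have y2: "(y r)\<^sup>2 \<le> 9/4 * \<gamma>\<^sup>2 * z0\<^sup>2 * r\<^sup>2" by (simp add: power2_eq_square algebra_simps)
    have "y r \<noteq> 0" using H r unfolding Hyp_def by auto
    moreover have "\<gamma> * (- z0) / 2 \<le> \<gamma> * \<bar>z0 + ez r\<bar>"
      using mult_left_mono[OF lo, of \<gamma>] gpos by simp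
    ultimately show ?thesis using P1 yr y2 by auto
  qed
  have Dlow: "D r \<ge> c1 * (r powr k)^6 / r" if r: "0 < r" "r \<le> d" for r
  proof -
    have rr: "r < d0" using r d by auto
    have pr: "r powr k \<ge> 1" "(y r)\<^sup>2 \<le> 9/4 * \<gamma>\<^sup>2 * z0\<^sup>2 * r\<^sup>2" "y r \<noteq> 0" using props[OF r] by auto
    have eb: "\<bar>eu r\<bar> < 1/2" "\<bar>ev r\<bar> < 1/2" using d0(2)[OF r(1) rr] by auto
    have uv: "u r = u0 * r powr k * (1 + eu r)" "v r = v0 * r powr k * (1 + ev r)" using uvform r by auto
    have u2: "(u r)\<^sup>2 \<ge> u0\<^sup>2 * (r powr k)\<^sup>2 / 4"
    proof -
      have "(1 + eu r)\<^sup>2 \<ge> (1/2)\<^sup>2" using eb by (intro power_mono) auto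
      then have "(1 + eu r)\<^sup>2 \<ge> 1/4" by (simp add: power2_eq_square)
      then have "u0\<^sup>2 * (r powr k)\<^sup>2 * (1/4) \<le> u0\<^sup>2 * (r powr k)\<^sup>2 * (1 + eu r)\<^sup>2"
        by (intro mult_left_mono) auto
      then show ?thesis unfolding uv by (simp add: power_mult_distrib)
    qed
    have v4: "(v r)^4 \<ge> v0^4 * (r powr k)^4 / 16"
    proof -
      have "(1 + ev r)^4 \<ge> (1/2)^4" using eb by (intro power_mono) auto
      then have "(1 + ev r)^4 \<ge> 1/16" by (simp add: eval_nat_numeral)
      then have "v0^4 * (r powr k)^4 * (1/16) \<le> v0^4 * (r powr k)^4 * (1 + ev r)^4"
        by (intro mult_left_mono) auto
      then show ?thesis unfolding uv by (simp add: power_mult_distrib)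
    qed
    have T2l: "T2 r \<ge> r * (u r)\<^sup>2 * (cc\<^sup>2 * (v r)^4) / (y r)\<^sup>2"
    proof -
      have "Qf r * (\<gamma> * (s r)\<^sup>2 / 2) \<ge> 0" unfolding Qf_def using gpos by auto
      then have "r * (u r)\<^sup>2 * (cc\<^sup>2 * (v r)^4) / (y r)\<^sup>2 \<le>
          r * (u r)\<^sup>2 * (Qf r * (\<gamma> * (s r)\<^sup>2 / 2) + cc\<^sup>2 * (v r)^4) / (y r)\<^sup>2"
        using r by (intro divide_right_mono mult_left_mono) auto
      then show ?thesis using T2_lower[OF r(1) pr(3)] by linarith
    qed
    have "D r \<ge> T2 r" using D_split[OF pr(3)] T1_nonneg[OF H r(1)] by auto
    moreover have "r * (u r)\<^sup>2 * (cc\<^sup>2 * (v r)^4) / (y r)\<^sup>2 \<ge> c1 * (r powr k)^6 / r"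
    proof -
      have ypos: "(y r)\<^sup>2 > 0" using pr(3) by auto
      have A: "(u r)\<^sup>2 * (v r)^4 \<ge> (u0\<^sup>2 * (r powr k)\<^sup>2 / 4) * (v0^4 * (r powr k)^4 / 16)"
        using u2 v4 by (intro mult_mono) auto
      have "c1 * (r powr k)^6 * (y r)\<^sup>2 \<le> c1 * (r powr k)^6 * (9/4 * \<gamma>\<^sup>2 * z0\<^sup>2 * r\<^sup>2)"
        using pr(2) c1 by (intro mult_left_mono) auto
      also have "\<dots> = r\<^sup>2 * (4 * ((u0\<^sup>2 * (r powr k)\<^sup>2 / 4) * (v0^4 * (r powr k)^4 / 16)))"
        unfolding c1_def using gpos z0n by (simp add: field_simps power2_eq_square eval_nat_numeral)
      also have "\<dots> \<le> r\<^sup>2 * (4 * ((u r)\<^sup>2 * (v r)^4))"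
        using A by (intro mult_left_mono) auto
      finally have "c1 * (r powr k)^6 * (y r)\<^sup>2 \<le> r\<^sup>2 * (4 * ((u r)\<^sup>2 * (v r)^4))" .
      then show ?thesis using ypos r cc2 by (simp add: field_simps power2_eq_square)
    qed
    ultimately show ?thesis using T2l by linarith
  qed
  have Bulow: "Bu r \<ge> - C2 * (r powr k)^4" if r: "0 < r" "r \<le> d" for r
  proof -
    have rr: "r < d0" using r d by auto
    have pr: "r powr k \<ge> 1" "y r = r * (\<gamma> * (z0 + ez r))" "\<gamma> * (- z0) / 2 \<le> \<gamma> * \<bar>z0 + ez r\<bar>"
      using props[OF r] by auto
    have eb: "\<bar>eu r\<bar> < 1/2" "\<bar>ev r\<bar> < 1/2" "\<bar>s r\<bar> < 1" using d0(2)[OF r(1) rr] by auto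
    have uv: "u r = u0 * r powr k * (1 + eu r)" "v r = v0 * r powr k * (1 + ev r)" using uvform r by auto
    define P where "P = r powr k"
    have P1: "P \<ge> 1" using pr(1) unfolding P_def .
    have au: "\<bar>u r\<bar> \<le> 3/2 * \<bar>u0\<bar> * P"
    proof -
      have "\<bar>1 + eu r\<bar> \<le> 3/2" using eb by auto
      then have "\<bar>u0\<bar> * P * \<bar>1 + eu r\<bar> \<le> \<bar>u0\<bar> * P * (3/2)" using P1 by (intro mult_left_mono) auto
      moreover have "\<bar>u r\<bar> = \<bar>u0\<bar> * P * \<bar>1 + eu r\<bar>" unfolding uv P_def[symmetric] using P1 by (simp add: abs_mult)
      ultimately show ?thesis by simp
    qed
    have av: "\<bar>v r\<bar> \<le> 3/2 * \<bar>v0\<bar> * P"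
    proof -
      have "\<bar>1 + ev r\<bar> \<le> 3/2" using eb by auto
      then have "\<bar>v0\<bar> * P * \<bar>1 + ev r\<bar> \<le> \<bar>v0\<bar> * P * (3/2)" using P1 by (intro mult_left_mono) auto
      moreover have "\<bar>v r\<bar> = \<bar>v0\<bar> * P * \<bar>1 + ev r\<bar>" unfolding uv P_def[symmetric] using P1 by (simp add: abs_mult)
      ultimately show ?thesis by simp
    qed
    have X: "\<gamma> * (s r)\<^sup>2 / 2 + cc * (v r)\<^sup>2 \<le> (\<gamma>/2 + 9/2 * v0\<^sup>2) * P\<^sup>2"
    proof -
      have "(s r)\<^sup>2 \<le> 1" using eb(3) by (simp add: abs_square_le_1)
      moreover have "1 \<le> P\<^sup>2" using P1 by (simp add: one_le_power)
      ultimately have "(s r)\<^sup>2 \<le> P\<^sup>2" by linarith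
      then have G: "\<gamma> * (s r)\<^sup>2 / 2 \<le> \<gamma> / 2 * P\<^sup>2"
        using gpos by (simp add: mult_left_mono)
      have "(v r)\<^sup>2 \<le> (3/2 * \<bar>v0\<bar> * P)\<^sup>2" using av by (metis abs_ge_zero power2_abs power_mono)
      moreover have "(3/2 * \<bar>v0\<bar> * P)\<^sup>2 = 9/4 * v0\<^sup>2 * P\<^sup>2"
        by (simp only: power_mult_distrib power2_abs) (simp add: power2_eq_square)
      ultimately have "cc * (v r)\<^sup>2 \<le> 9/2 * v0\<^sup>2 * P\<^sup>2" using cc2 by simp
      then show ?thesis using G by (simp add: algebra_simps)
    qed
    have X0: "\<gamma> * (s r)\<^sup>2 / 2 + cc * (v r)\<^sup>2 \<ge> 0" using gpos cc_nonneg by auto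
    have e1: "Bu r = - (u r * v r * Xf r) / (\<gamma> * (z0 + ez r))"
      unfolding Bu_def Xf_def pr(2) by (rule alg_cancel) (use r in auto)
    have "\<bar>Bu r\<bar> = \<bar>u r\<bar> * \<bar>v r\<bar> * Xf r / (\<gamma> * \<bar>z0 + ez r\<bar>)"
      unfolding e1 using X0 gpos unfolding Xf_def by (simp add: abs_mult)
    also have "\<dots> = \<bar>u r\<bar> * \<bar>v r\<bar> * (\<gamma> * (s r)\<^sup>2 / 2 + cc * (v r)\<^sup>2) / (\<gamma> * \<bar>z0 + ez r\<bar>)"
      unfolding Xf_def ..
    also have "\<dots> \<le> (3/2 * \<bar>u0\<bar> * P) * (3/2 * \<bar>v0\<bar> * P) * ((\<gamma>/2 + 9/2 * v0\<^sup>2) * P\<^sup>2) / (\<gamma> * (- z0) / 2)"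
    proof (rule frac_le)
      show "0 \<le> 3 / 2 * \<bar>u0\<bar> * P * (3 / 2 * \<bar>v0\<bar> * P) * ((\<gamma> / 2 + 9 / 2 * v0\<^sup>2) * P\<^sup>2)"
        using P1 gpos by auto
      show "\<bar>u r\<bar> * \<bar>v r\<bar> * (\<gamma> * (s r)\<^sup>2 / 2 + cc * (v r)\<^sup>2)
          \<le> 3 / 2 * \<bar>u0\<bar> * P * (3 / 2 * \<bar>v0\<bar> * P) * ((\<gamma> / 2 + 9 / 2 * v0\<^sup>2) * P\<^sup>2)"
        using au av X X0 P1 by (intro mult_mono) auto
      show "0 < \<gamma> * - z0 / 2" using gpos z0n by (simp add: mult_pos_neg)
      show "\<gamma> * - z0 / 2 \<le> \<gamma> * \<bar>z0 + ez r\<bar>" using pr(3) .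
    qed
    also have "\<dots> = C2 * P^4" unfolding C2_def using gpos z0n
      by (simp add: field_simps power2_eq_square eval_nat_numeral abs_mult)
    finally show ?thesis unfolding P_def by linarith
  qed
  have Bud: "(B has_real_derivative D t) (at t) \<and> B t = Bu t" if "t > 0" for t
    using B_der[OF that] B_Bu[OF that] H that unfolding Hyp_def by auto
  show False
  proof (cases "k = 0")
    case True
    have P1: "\<And>r. r > 0 \<Longrightarrow> r powr k = 1" using True by simp
    have mono: "Bu r - c1 * ln r \<le> Bu d - c1 * ln d" if r: "0 < r" "r \<le> d" for r
    proof -
      have "B r - c1 * ln r \<le> B d - c1 * ln d"
      proof (rule mono_from_deriv[OF r(1) r(2), of "\<lambda>t. B t - c1 * ln t" "\<lambda>t. D t - c1 / t"])
        fix t assume t: "r \<le> t" "t \<le> d"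
        then have tp: "t > 0" using r by auto
        have "((\<lambda>t. B t - c1 * ln t) has_real_derivative D t - c1 * (1 / t)) (at t)"
          using Bud[OF tp] tp by (auto intro!: derivative_eq_intros)
        moreover have "D t \<ge> c1 / t" using Dlow[OF tp t(2)] P1[OF tp] by simp
        ultimately show "((\<lambda>t. B t - c1 * ln t) has_real_derivative D t - c1 / t) (at t) \<and> D t - c1 / t \<ge> 0"
          by auto
      qed
      then show ?thesis using Bud r d by auto
    qed
    define K0 where "K0 = C2 + Bu d - c1 * ln d"
    have "\<forall>Z. eventually (\<lambda>r. Z < - c1 * ln r - K0) (at_right 0)"
      using lim_05[OF c1, of K0] unfolding filterlim_at_top_dense by simp
    then have "eventually (\<lambda>r. - c1 * ln r - K0 > 0) (at_right 0)" by blast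
    moreover have "eventually (\<lambda>r. 0 < r \<and> r < d) (at_right 0)"
      unfolding eventually_at_right_field using d by (intro exI[of _ d]) auto
    ultimately have "eventually (\<lambda>r. - c1 * ln r - K0 > 0 \<and> 0 < r \<and> r < d) (at_right 0)"
      by (rule eventually_conj)
    then obtain r where r: "- c1 * ln r - K0 > 0" "0 < r" "r < d"
      using eventually_happens'[of "at_right (0::real)"] by auto
    have "Bu r \<ge> - C2" using Bulow[of r] r P1[of r] by auto
    then show False using mono[of r] r unfolding K0_def by auto
  next
    case False
    then have kn: "k < 0" using k0 by auto
    have pw6: "(r powr k)^6 = r powr (6 * k)" "(r powr k)^4 = r powr (4 * k)" if "r > 0" for r
      using that by (simp_all add: powr_power)
    have mono: "Bu r - c1 * (r powr (6 * k) / (6 * k)) \<le> Bu d - c1 * (d powr (6 * k) / (6 * k))"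
      if r: "0 < r" "r \<le> d" for r
    proof -
      have "B r - c1 * (r powr (6 * k) / (6 * k)) \<le> B d - c1 * (d powr (6 * k) / (6 * k))"
      proof (rule mono_from_deriv[OF r(1) r(2), of "\<lambda>t. B t - c1 * (t powr (6 * k) / (6 * k))"
            "\<lambda>t. D t - c1 * (t powr (6 * k) / t)"])
        fix t assume t: "r \<le> t" "t \<le> d"
        then have tp: "t > 0" using r by auto
        have "((\<lambda>t. B t - c1 * (t powr (6 * k) / (6 * k))) has_real_derivative
            D t - c1 * ((6 * k) * t powr (6 * k - 1) / (6 * k))) (at t)"
          using Bud[OF tp] tp by (auto intro!: derivative_eq_intros)
        moreover have "(6 * k) * t powr (6 * k - 1) / (6 * k) = t powr (6 * k) / t"
          using kn tp by (simp add: powr_diff)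
        moreover have "D t \<ge> c1 * (t powr (6 * k) / t)" using Dlow[OF tp t(2)] pw6[OF tp] by simp
        ultimately show "((\<lambda>t. B t - c1 * (t powr (6 * k) / (6 * k))) has_real_derivative
            D t - c1 * (t powr (6 * k) / t)) (at t) \<and> D t - c1 * (t powr (6 * k) / t) \<ge> 0"
          by auto
      qed
      then show ?thesis using Bud r d by auto
    qed
    define K1 where "K1 = Bu d - c1 * (d powr (6 * k) / (6 * k))"
    have c1': "c1 / (- 6 * k) > 0" using c1 kn by (simp add: divide_pos_neg)
    have "\<forall>Z. eventually (\<lambda>r. Z < c1 / (- 6 * k) * r powr (6 * k) - C2 * r powr (4 * k) - K1) (at_right 0)"
      using lim_04[OF kn c1', of C2 K1] unfolding filterlim_at_top_dense by simp
    then have "eventually (\<lambda>r. c1 / (- 6 * k) * r powr (6 * k) - C2 * r powr (4 * k) - K1 > 0) (at_right 0)"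
      by blast
    moreover have "eventually (\<lambda>r. 0 < r \<and> r < d) (at_right 0)"
      unfolding eventually_at_right_field using d by (intro exI[of _ d]) auto
    ultimately have "eventually (\<lambda>r. c1 / (- 6 * k) * r powr (6 * k) - C2 * r powr (4 * k) - K1 > 0 \<and> 0 < r \<and> r < d) (at_right 0)"
      by (rule eventually_conj)
    then obtain r where r: "c1 / (- 6 * k) * r powr (6 * k) - C2 * r powr (4 * k) - K1 > 0" "0 < r" "r < d"
      using eventually_happens'[of "at_right (0::real)"] by auto
    have b: "Bu r \<ge> - C2 * r powr (4 * k)" using Bulow[of r] r pw6[of r] by auto
    have "c1 / (- 6 * k) * r powr (6 * k) = - (c1 * (r powr (6 * k) / (6 * k)))" using kn by (simp add: field_simps)
    then show False using mono[of r] r b unfolding K1_def by auto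
  qed
qed

end

context VX begin

lemma Hyp_holds: assumes bad: "\<not> (- 2 * n < m \<and> m < 0)" shows "Hyp"
  unfolding Hyp_def
proof (intro allI impI)
  fix r :: real assume r: "r > 0"
  define P where "P = r * y r"
  have P: "P = \<gamma> * a r - K / 2" unfolding P_def using ry_eq[OF r] .
  have ap: "0 < a r" "a r < of_int n" using a_pos[OF r] a_lt_n[OF r] by auto
  have key: "P * (P - a r) \<ge> 0 \<and> P \<noteq> 0 \<and> (m = 0 \<longrightarrow> P - a r \<noteq> 0)"
  proof (cases "m \<ge> 0")
    case True
    have "\<gamma> * (a r - of_int n) < 0" using gpos ap by (simp add: mult_pos_neg)
    then have Pn: "P < 0" unfolding P K_def using True by (simp add: algebra_simps)
    then have "P - a r < 0" using ap by auto
    then show ?thesis using Pn by (simp add: mult_neg_neg less_imp_le)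
  next
    case False
    then have mle: "of_int m \<le> - 2 * (of_int n :: real)" using bad by auto
    have "\<gamma> * a r > 0" using gpos ap by auto
    moreover have "(1 - \<gamma>) * of_int n \<ge> 0" using g1 n1 by auto
    ultimately have Pp: "P > 0" unfolding P K_def using mle by (simp add: algebra_simps)
    have h: "(1 - \<gamma>) * (of_int n - a r) \<ge> 0" using g1 ap by auto
    have e1: "P - a r = \<gamma> * a r - a r - \<gamma> * of_int n - of_int m / 2" unfolding P K_def by (simp add: algebra_simps)
    have h': "\<gamma> * a r - a r - \<gamma> * of_int n + of_int n \<ge> 0" using h by (simp add: algebra_simps)
    then have "P - a r \<ge> 0" unfolding e1 using mle by linarith
    then show ?thesis using Pp False by auto
  qed
  have yr: "y r = P / r" unfolding P_def using r by simp
  have zr: "z r = a r / r" unfolding a_def using r by simp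
  have "(y r - z r) * y r = (P * (P - a r)) / r\<^sup>2" unfolding yr zr using r
    by (simp add: field_simps power2_eq_square)
  then show "y r \<noteq> 0 \<and> 0 \<le> (y r - z r) * y r" using key r yr by auto
qed

lemma x_ne_m0: assumes "m = 0" "r > 0" shows "y r \<noteq> z r"
proof -
  have "r * y r - r * z r = \<gamma> * a r - K / 2 - a r" using ry_eq[OF assms(2)] unfolding a_def by simp
  also have "\<dots> = (\<gamma> - 1) * a r - \<gamma> * of_int n" unfolding K_def using assms(1) by (simp add: algebra_simps)
  also have "\<dots> < 0"
  proof -
    have "(\<gamma> - 1) * a r \<le> 0" using g1 a_pos[OF assms(2)] by (simp add: mult_nonpos_nonneg)
    moreover have "\<gamma> * of_int n > 0" using gpos n1 by auto
    ultimately show ?thesis by linarith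
  qed
  finally show ?thesis by auto
qed

lemma main_contra: assumes nontriv: "\<not> (\<forall>r>0. u r = 0 \<and> v r = 0)" and bad: "\<not> (- 2 * n < m \<and> m < 0)"
  shows False
proof -
  have H: "Hyp" using Hyp_holds[OF bad] .
  have l1: "(Bu \<longlongrightarrow> 0) at_top"
  proof (cases "K = 0")
    case False then show ?thesis using Bu_lim_top by auto
  next
    case True
    have "m < 0" using True gpos n1 unfolding K_def
      by (smt (verit) mult_pos_pos of_int_0_less_iff of_int_less_0_iff)
    then have mle: "of_int m \<le> - 2 * (of_int n :: real)" using bad by auto
    have "2 * \<gamma> * of_int n = - of_int m" using True unfolding K_def by simp
    then have "2 * \<gamma> * of_int n \<ge> 2 * of_int n" using mle by simp
    then have "\<gamma> \<ge> 1" using n1 by simp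
    then have "\<gamma> = 1" using g1 by simp
    then show ?thesis using Bu_lim_top_edge True by auto
  qed
  have l0: "(Bu \<longlongrightarrow> 0) (at_right 0)"
  proof (cases "m = 0")
    case False then show ?thesis using Bu_lim0_mne0 by auto
  next
    case m0: True
    show ?thesis
    proof (cases "cc = 0 \<or> k > 0")
      case True then show ?thesis using Bu_lim0_m0[OF m0] by auto
    next
      case False
      then have nl: "nl" and k0: "k \<le> 0" unfolding cc_def by (auto split: if_splits)
      show ?thesis
      proof (cases "u0 = 0 \<or> v0 = 0")
        case True
        then have "eventually (\<lambda>r. Bu r = 0) (at_right 0)"
          unfolding eventually_at_right_field using uvform
          by (intro exI[of _ 1]) (auto simp: Bu_def)
        then show ?thesis by (rule tendsto_eventually)
      next
        case False
        then show ?thesis using small_k_False[OF H l1 m0 nl k0] by auto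
      qed
    qed
  qed
  have D0: "\<And>r. r > 0 \<Longrightarrow> D r = 0" using D_zero[OF H l0 l1] by auto
  obtain e where e: "e > 0" "\<And>r. 0 < r \<Longrightarrow> r < e \<Longrightarrow> s r \<noteq> 0" using s_ne_near0 by auto
  have uz: "\<And>r. 0 < r \<Longrightarrow> r < e \<Longrightarrow> u r = 0" using u_zero_pt[OF H D0] e by auto
  have u00: "u0 = 0" using u0_zero[OF e(1) uz] .
  have v00: "v0 = 0"
  proof (cases "m = 0")
    case False
    show ?thesis using v_zero_from_u[OF H \<open>m \<noteq> 0\<close> e(1)] uz by blast
  next
    case True
    have "\<And>r. 0 < r \<Longrightarrow> r < e \<Longrightarrow> v r = 0" using v_zero_pt[OF H D0] e x_ne_m0[OF True] by auto
    then show ?thesis using v0_zero[OF e(1)] by blast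
  qed
  have "\<forall>r>0. u r = 0 \<and> v r = 0" using uvform u00 v00 by auto
  then show False using nontriv by auto
qed

end


theorem theorem2:
  fixes n m :: int and \<beta> \<gamma> :: real and s z u v :: "real \<Rightarrow> real"
  assumes "n \<ge> 1" and "\<beta> > 0" and "0 < \<gamma>" and "\<gamma> \<le> 1"
    and "NO_vortex n \<beta> s z"
    and "\<not> (\<forall>r>0. u r = 0 \<and> v r = 0)"
    and "W_eqs True \<gamma> s (\<lambda>r. \<gamma> * z r - (2 * \<gamma> * of_int n + of_int m) / (2 * r)) u v
         \<or> W_eqs False \<gamma> s (\<lambda>r. \<gamma> * z r - (2 * \<gamma> * of_int n + of_int m) / (2 * r)) u v"
    and "W_bc \<gamma> u v"
  shows "- 2 * n < m \<and> m < 0"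
proof (rule ccontr)
  assume bad: "\<not> (- 2 * n < m \<and> m < 0)"
  define y where "y = (\<lambda>r. \<gamma> * z r - (2 * \<gamma> * of_int n + of_int m) / (2 * r))"
  obtain nl where W: "W_eqs nl \<gamma> s y u v" using assms(7) unfolding y_def by blast
  have NO: "(\<forall>r>0. s differentiable (at r) \<and> deriv s differentiable (at r) \<and>
            z differentiable (at r) \<and> deriv z differentiable (at r))"
     "(\<forall>r>0. deriv (deriv z) r + deriv z r / r - z r / r\<^sup>2 - z r * (s r)\<^sup>2 = 0)"
     "(\<exists>s0 e. (e \<longlongrightarrow> 0) (at_right 0) \<and> (\<forall>r>0. s r = s0 * r ^ nat n * (1 + e r)))"
     "(\<exists>z0 e. (e \<longlongrightarrow> 0) (at_right 0) \<and> (\<forall>r>0. z r = of_int n / r + z0 * r + r * e r))"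
     "(\<exists>C a. a > 0 \<and> (\<forall>\<^sub>F r in at_top. \<bar>s r - 1\<bar> \<le> C * exp (- a * r) \<and>
                                          \<bar>z r\<bar> \<le> C * exp (- a * r)))"
    using assms(5) unfolding NO_vortex_def by auto
  obtain s0 es where S: "(es \<longlongrightarrow> 0) (at_right 0)" "\<forall>r>0. s r = s0 * r ^ nat n * (1 + es r)"
    using NO(3) by blast
  obtain z0 ez where Z: "(ez \<longlongrightarrow> 0) (at_right 0)" "\<forall>r>0. z r = of_int n / r + z0 * r + r * ez r"
    using NO(4) by blast
  obtain Cd ad where C: "ad > 0" "\<forall>\<^sub>F r in at_top. \<bar>s r - 1\<bar> \<le> Cd * exp (- ad * r) \<and> \<bar>z r\<bar> \<le> Cd * exp (- ad * r)"
    using NO(5) by blast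
  have BC: "\<exists>k u0 v0 eu ev. k > - 1/2 \<and> (eu \<longlongrightarrow> 0) (at_right 0) \<and> (ev \<longlongrightarrow> 0) (at_right 0) \<and>
        (\<forall>r>0. u r = u0 * r powr k * (1 + eu r) \<and> v r = v0 * r powr k * (1 + ev r))"
     "\<exists>C p. \<forall>\<^sub>F r in at_top. \<bar>u r\<bar> \<le> C * r powr p * exp (- sqrt \<gamma> * r) \<and>
                              \<bar>v r\<bar> \<le> C * r powr p * exp (- sqrt \<gamma> * r)"
    using assms(8) unfolding W_bc_def by auto
  obtain k u0 v0 eu ev where B1: "k > - 1/2" "(eu \<longlongrightarrow> 0) (at_right 0)" "(ev \<longlongrightarrow> 0) (at_right 0)"
        "\<forall>r>0. u r = u0 * r powr k * (1 + eu r) \<and> v r = v0 * r powr k * (1 + ev r)"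
    using BC(1) by blast
  obtain Cw pw where B2: "\<forall>\<^sub>F r in at_top. \<bar>u r\<bar> \<le> Cw * r powr pw * exp (- sqrt \<gamma> * r) \<and>
                              \<bar>v r\<bar> \<le> Cw * r powr pw * exp (- sqrt \<gamma> * r)"
    using BC(2) by blast
  have WE: "(\<forall>r>0. u differentiable (at r) \<and> v differentiable (at r) \<and> deriv v differentiable (at r))"
     "(\<forall>r>0. deriv (deriv v) r + deriv v r / r - v r / r\<^sup>2
              + 2 * (2 * deriv y r * u r + y r * deriv u r + y r * u r / r)
              - (if nl then 4 * v r * (u r)\<^sup>2 else 0)
              - \<gamma> * v r * (s r)\<^sup>2 = 0)"
     "(\<forall>r>0. deriv v r * y r - v r * deriv y r
              + (2 * (y r)\<^sup>2 + \<gamma> / 2 * (s r)\<^sup>2 + (if nl then 2 * (v r)\<^sup>2 else 0)) * u r = 0)"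
    using W unfolding W_eqs_def by auto
  interpret VX n m \<gamma> s z u v y nl s0 z0 es ez Cd ad k u0 v0 eu ev Cw pw
  proof
    show "1 \<le> n" "0 < \<gamma>" "\<gamma> \<le> 1" using assms by auto
  qed (use NO S Z C y_def WE B1 B2 in auto)
  show False using main_contra[OF assms(6) bad] .
qed


end
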